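(* In the setting below, if $X_0$ and $Y_0$ agree on $G$ (e.g. both all-plus), there is a coupling of the continuous-time speed-up dynamics $(X_t)$ on $T$ and $(Y_t)$ on $F$ such that, with $\tau=\inf\{t: X_t(u)\ne Y_t(u)\text{ for some }u\in G\}$, $$\mathbb P(\tau>t)\ge\exp(-\theta^{r-\ell}b^\ell t)\quad\text{for all }t\ge0.$$
   Context: Let $b\ge2$, $\beta>0$, $\theta=\tanh\beta$, and $T$ the $b$-ary tree of height $h$ (root $\rho$, every vertex at distance $<h$ has $b$ children, $H_k$ = vertices at distance $k$, $T_u$ = subtree of $u$ and its descendants), with the free-boundary Ising Gibbs measure $\mu\propto\exp(\beta\sum_{uv}\sigma(u)\sigma(v))$. Fix integers $1\le\ell<r\le h$; for each $v\in H_\ell$ fix a descendant $w_v\in H_r$, and let $W=\{w_v\}$, $B_v=(T_v\setminus T_{w_v})\cup\{w_v\}$. $(X_t)$ is the continuous-time block dynamics on $T$ with blocks $\{B_v:v\in H_\ell\}\cup\{\{u\}:u\notin W\}$: each block has an independent rate-one Poisson clock and, when it rings, its spins are resampled from $\mu$ conditioned on the spins outside it. Let $L_v$ be the path from $v$ to $w_v$ (inclusive) and let $F$ be the forest which is the disjoint union over $v\in H_\ell$ of the trees $L_v\cup T_{w_v}$ (rooted at $v$, with no parent), viewed as a separate graph naturally identified with a subset of $T$, carrying its own free-boundary Ising measure at $\beta$. $(Y_t)$ is the continuous-time block dynamics on $F$ with blocks $\{L_v:v\in H_\ell\}\cup\{\{u\}:u\in F\setminus W\}$, each at rate one. $G=\bigcup_{v\in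 H_\ell}T_{w_v}$. *)

theory Defs
  imports Complex_Main "HOL-Library.Sublist"
begin

text \<open>Vertices are words over {0..<b} of length at most h; the root is [],
  the children of u are u @ [i] for i < b.\<close>

definition tree_vertices :: "nat \<Rightarrow> nat \<Rightarrow> nat list set" where
  "tree_vertices b h = {u. length u \<le> h \<and> set u \<subseteq> {..<b}}"

definition level :: "nat \<Rightarrow> nat \<Rightarrow> nat \<Rightarrow> nat list set" where
  "level b h k = {u \<in> tree_vertices b h. length u = k}"

definition subtree :: "nat \<Rightarrow> nat \<Rightarrow> nat list \<Rightarrow> nat list set" where
  "subtree b h u = {x \<in> tree_vertices b h. prefix u x}"

definition edges :: "nat list set \<Rightarrow> (nat list \<times> nat list) set" where
  "edges V = {(u, u @ [i]) | u i. u \<in> V \<and> u @ [i] \<in> V}"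

definition confs :: "nat list set \<Rightarrow> (nat list \<Rightarrow> real) set" where
  "confs V = {\<sigma>. (\<forall>u\<in>V. \<sigma> u = 1 \<or> \<sigma> u = -1) \<and> (\<forall>u. u \<notin> V \<longrightarrow> \<sigma> u = 1)}"

definition gibbs_weight :: "real \<Rightarrow> nat list set \<Rightarrow> (nat list \<Rightarrow> real) \<Rightarrow> real" where
  "gibbs_weight \<beta> V \<sigma> = exp (\<beta> * (\<Sum>e\<in>edges V. \<sigma> (fst e) * \<sigma> (snd e)))"

definition ising :: "real \<Rightarrow> nat list set \<Rightarrow> (nat list \<Rightarrow> real) \<Rightarrow> real" where
  "ising \<beta> V \<sigma> = (if \<sigma> \<in> confs V
      then gibbs_weight \<beta> V \<sigma> / (\<Sum>\<eta>\<in>confs V. gibbs_weight \<beta> V \<eta>) else 0)"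

text \<open>Heat-bath update of block B: resample spins in B from the Gibbs measure
  conditioned on the spins outside B.\<close>
definition block_kernel ::
  "real \<Rightarrow> nat list set \<Rightarrow> nat list set \<Rightarrow> (nat list \<Rightarrow> real) \<Rightarrow> (nat list \<Rightarrow> real) \<Rightarrow> real" where
  "block_kernel \<beta> V B \<sigma> \<sigma>' =
     (if \<sigma>' \<in> confs V \<and> (\<forall>u\<in>V - B. \<sigma>' u = \<sigma> u)
      then ising \<beta> V \<sigma>' / (\<Sum>\<eta>\<in>{\<eta>\<in>confs V. \<forall>u\<in>V - B. \<eta> u = \<sigma> u}. ising \<beta> V \<eta>)
      else 0)"

text \<open>Off-diagonal jump rates of continuous-time block dynamics, each block with a
  rate-one Poisson clock.\<close>
definition block_rate ::
  "real \<Rightarrow> nat list set \<Rightarrow> nat list set set \<Rightarrow> (nat list \<Rightarrow> real) \<Rightarrow> (nat list \<Rightarrow> real) \<Rightarrow> real" where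
  "block_rate \<beta> V Bs \<sigma> \<sigma>' = (\<Sum>B\<in>Bs. block_kernel \<beta> V B \<sigma> \<sigma>')"

fun mpow :: "'s set \<Rightarrow> ('s \<Rightarrow> 's \<Rightarrow> real) \<Rightarrow> nat \<Rightarrow> 's \<Rightarrow> 's \<Rightarrow> real" where
  "mpow S M 0 z z' = (if z = z' then 1 else 0)"
| "mpow S M (Suc n) z z' = (\<Sum>y\<in>S. M z y * mpow S M n y z')"

definition mexp :: "'s set \<Rightarrow> ('s \<Rightarrow> 's \<Rightarrow> real) \<Rightarrow> real \<Rightarrow> 's \<Rightarrow> 's \<Rightarrow> real" where
  "mexp S M t z z' = (\<Sum>n. t ^ n / fact n * mpow S M n z z')"

text \<open>For a chain on finite S with off-diagonal rates Q, the probability, started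
  from z0, of staying in A \<subseteq> S during the whole time interval [0,t], i.e. the
  row sum of exp(t Q_A) with Q_A the generator killed on leaving A.\<close>
definition stay_prob :: "'s set \<Rightarrow> ('s \<Rightarrow> 's \<Rightarrow> real) \<Rightarrow> 's set \<Rightarrow> 's \<Rightarrow> real \<Rightarrow> real" where
  "stay_prob S Q A z0 t =
     (\<Sum>z\<in>A. mexp A (\<lambda>x y. if x = y then - (\<Sum>y'\<in>S - {x}. Q x y') else Q x y) t z0 z)"

text \<open>Q (off-diagonal rates on S1 \<times> S2) is a Markovian coupling of the chains with
  off-diagonal rates L1 on S1 and L2 on S2.\<close>
definition markov_coupling ::
  "'a set \<Rightarrow> ('a \<Rightarrow> 'a \<Rightarrow> real) \<Rightarrow> 'b set \<Rightarrow> ('b \<Rightarrow> 'b \<Rightarrow> real)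
   \<Rightarrow> ('a \<times> 'b \<Rightarrow> 'a \<times> 'b \<Rightarrow> real) \<Rightarrow> bool" where
  "markov_coupling S1 L1 S2 L2 Q \<longleftrightarrow>
     (\<forall>z\<in>S1 \<times> S2. \<forall>z'\<in>S1 \<times> S2. z' \<noteq> z \<longrightarrow> Q z z' \<ge> 0) \<and>
     (\<forall>x\<in>S1. \<forall>y\<in>S2. \<forall>x'\<in>S1. x' \<noteq> x \<longrightarrow> (\<Sum>y'\<in>S2. Q (x, y) (x', y')) = L1 x x') \<and>
     (\<forall>x\<in>S1. \<forall>y\<in>S2. \<forall>y'\<in>S2. y' \<noteq> y \<longrightarrow> (\<Sum>x'\<in>S1. Q (x, y) (x', y')) = L2 y y')"

definition path_L :: "nat list \<Rightarrow> nat list \<Rightarrow> nat list set" where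
  "path_L v wv = {x. prefix v x \<and> prefix x wv}"

definition block_B :: "nat \<Rightarrow> nat \<Rightarrow> nat list \<Rightarrow> nat list \<Rightarrow> nat list set" where
  "block_B b h v wv = (subtree b h v - subtree b h wv) \<union> {wv}"

definition forest_F :: "nat \<Rightarrow> nat \<Rightarrow> nat \<Rightarrow> (nat list \<Rightarrow> nat list) \<Rightarrow> nat list set" where
  "forest_F b h l w = (\<Union>v\<in>level b h l. path_L v (w v) \<union> subtree b h (w v))"

definition set_G :: "nat \<Rightarrow> nat \<Rightarrow> nat \<Rightarrow> (nat list \<Rightarrow> nat list) \<Rightarrow> nat list set" where
  "set_G b h l w = (\<Union>v\<in>level b h l. subtree b h (w v))"

definition blocks_X :: "nat \<Rightarrow> nat \<Rightarrow> nat \<Rightarrow> (nat list \<Rightarrow> nat list) \<Rightarrow> nat list set set" where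
  "blocks_X b h l w = (\<lambda>v. block_B b h v (w v)) ` level b h l
      \<union> (\<lambda>u. {u}) ` (tree_vertices b h - w ` level b h l)"

definition blocks_Y :: "nat \<Rightarrow> nat \<Rightarrow> nat \<Rightarrow> (nat list \<Rightarrow> nat list) \<Rightarrow> nat list set set" where
  "blocks_Y b h l w = (\<lambda>v. path_L v (w v)) ` level b h l
      \<union> (\<lambda>u. {u}) ` (forest_F b h l w - w ` level b h l)"

end

theory Submission
  imports Defs
begin


lemma binom_shift:
  fixes a :: "nat \<Rightarrow> real"
  shows "(\<Sum>i\<le>n. real (n choose i) * c^(n-i) * a (Suc i)) + c * (\<Sum>i\<le>n. real (n choose i) * c^(n-i) * a i)
       = (\<Sum>i\<le>Suc n. real (Suc n choose i) * c^(Suc n - i) * a i)"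
proof -
  have R: "(\<Sum>i\<le>Suc n. real (Suc n choose i) * c^(Suc n - i) * a i)
     = c^(Suc n) * a 0 + (\<Sum>j\<le>n. real (n choose j) * c^(n-j) * a (Suc j))
        + (\<Sum>j\<le>n. real (n choose Suc j) * c^(n-j) * a (Suc j))"
    by (simp only: sum.atMost_Suc_shift binomial_Suc_Suc of_nat_add sum.distrib distrib_left distrib_right)
       (simp add: algebra_simps)
  have L: "c * (\<Sum>i\<le>n. real (n choose i) * c^(n-i) * a i)
     = c^(Suc n) * a 0 + (\<Sum>j\<le>n. real (n choose Suc j) * c^(n-j) * a (Suc j))"
  proof (cases n)
    case 0 then show ?thesis by simp
  next
    case (Suc k)
    have 1: "(\<Sum>i\<le>n. real (n choose i) * c^(n-i) * a i)
       = c^n * a 0 + (\<Sum>j\<le>k. real (n choose Suc j) * c^(n - Suc j) * a (Suc j))"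
      using Suc by (simp add: sum.atMost_Suc_shift del: sum.atMost_Suc)
    have 2: "(\<Sum>j\<le>n. real (n choose Suc j) * c^(n-j) * a (Suc j))
        = (\<Sum>j\<le>k. real (n choose Suc j) * c^(n-j) * a (Suc j))"
      using Suc by (simp del: binomial_Suc_Suc)
    have 3: "c * (\<Sum>j\<le>k. real (n choose Suc j) * c^(n - Suc j) * a (Suc j))
        = (\<Sum>j\<le>k. real (n choose Suc j) * c^(n-j) * a (Suc j))"
      unfolding sum_distrib_left
    proof (rule sum.cong[OF refl])
      fix j assume "j \<in> {..k}"
      then have "n - j = Suc (n - Suc j)" using Suc by auto
      then show "c * (real (n choose Suc j) * c ^ (n - Suc j) * a (Suc j)) =
         real (n choose Suc j) * c ^ (n - j) * a (Suc j)" by simp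
    qed
    show ?thesis using 1 2 3 by (simp add: algebra_simps)
  qed
  show ?thesis using R L by simp
qed

lemma mpow_binom:
  assumes fin: "finite A" and MN: "\<forall>x\<in>A. \<forall>y\<in>A. M x y = N x y - (if x = y then K else 0)"
  shows "x \<in> A \<Longrightarrow> mpow A M n x z = (\<Sum>i\<le>n. real (n choose i) * (-K)^(n-i) * mpow A N i x z)"
proof (induction n arbitrary: x)
  case 0 then show ?case by simp
next
  case (Suc n)
  let ?S = "\<lambda>y. (\<Sum>i\<le>n. real (n choose i) * (-K)^(n-i) * mpow A N i y z)"
  have "mpow A M (Suc n) x z = (\<Sum>y\<in>A. M x y * ?S y)"
    using Suc by simp
  also have "\<dots> = (\<Sum>y\<in>A. N x y * ?S y) - (\<Sum>y\<in>A. (if x = y then K else 0) * ?S y)"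
    using MN Suc.prems by (simp add: sum_subtractf[symmetric] left_diff_distrib)
  also have "(\<Sum>y\<in>A. (if x = y then K else 0) * ?S y) = K * ?S x"
  proof -
    have "(\<Sum>y\<in>A. (if x = y then K else 0) * ?S y) = (\<Sum>y\<in>A. if x = y then K * ?S y else 0)"
      by (rule sum.cong) auto
    then show ?thesis using fin Suc.prems by (simp add: sum.delta)
  qed
  also have "(\<Sum>y\<in>A. N x y * ?S y) = (\<Sum>i\<le>n. real (n choose i) * (-K)^(n-i) * mpow A N (Suc i) x z)"
  proof -
    have "(\<Sum>y\<in>A. N x y * ?S y) = (\<Sum>y\<in>A. \<Sum>i\<le>n. real (n choose i) * (-K)^(n-i) * (N x y * mpow A N i y z))"
      by (simp add: sum_distrib_left mult_ac)
    also have "\<dots> = (\<Sum>i\<le>n. \<Sum>y\<in>A. real (n choose i) * (-K)^(n-i) * (N x y * mpow A N i y z))"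
      by (rule sum.swap)
    also have "\<dots> = (\<Sum>i\<le>n. real (n choose i) * (-K)^(n-i) * mpow A N (Suc i) x z)"
      by (simp add: sum_distrib_left)
    finally show ?thesis .
  qed
  finally have "mpow A M (Suc n) x z = (\<Sum>i\<le>n. real (n choose i) * (-K)^(n-i) * mpow A N (Suc i) x z)
      + (-K) * ?S x" by simp
  also have "\<dots> = (\<Sum>i\<le>Suc n. real (Suc n choose i) * (-K)^(Suc n - i) * mpow A N i x z)"
    by (rule binom_shift)
  finally show ?case .
qed

lemma mpow_bound:
  assumes fin: "finite A" and m: "\<forall>x\<in>A. \<forall>y\<in>A. \<bar>P x y\<bar> \<le> m"
  shows "x \<in> A \<Longrightarrow> \<bar>mpow A P n x z\<bar> \<le> (real (card A) * m)^n"
proof (induction n arbitrary: x)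
  case 0 then show ?case by simp
next
  case (Suc n)
  have m0: "m \<ge> 0" using m Suc.prems by (meson abs_ge_zero order_trans)
  have "\<bar>mpow A P (Suc n) x z\<bar> \<le> (\<Sum>y\<in>A. \<bar>P x y\<bar> * \<bar>mpow A P n y z\<bar>)"
    by (simp add: abs_mult[symmetric] sum_abs)
  also have "\<dots> \<le> (\<Sum>y\<in>A. m * (real (card A) * m)^n)"
    by (rule sum_mono) (use Suc m m0 in \<open>auto intro!: mult_mono\<close>)
  also have "\<dots> = (real (card A) * m)^Suc n" by simp
  finally show ?case .
qed

lemma mexp_summable:
  assumes fin: "finite A" and m: "\<forall>x\<in>A. \<forall>y\<in>A. \<bar>P x y\<bar> \<le> m" and x: "x \<in> A"
  shows "summable (\<lambda>n. norm (t ^ n / fact n * mpow A P n x z))"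
proof (rule summable_comparison_test[OF _ summable_exp[of "\<bar>t\<bar> * (real (card A) * m)"]])
  show "\<exists>N. \<forall>n\<ge>N. norm (norm (t ^ n / fact n * mpow A P n x z)) \<le> inverse (fact n) * (\<bar>t\<bar> * (real (card A) * m)) ^ n"
  proof (intro exI allI impI)
    fix n :: nat
    have "\<bar>mpow A P n x z\<bar> \<le> (real (card A) * m)^n" using mpow_bound[OF fin m x] .
    then have "\<bar>t\<bar>^n * \<bar>mpow A P n x z\<bar> \<le> \<bar>t\<bar>^n * (real (card A) * m)^n"
      by (intro mult_left_mono) auto
    then show "norm (norm (t ^ n / fact n * mpow A P n x z)) \<le> inverse (fact n) * (\<bar>t\<bar> * (real (card A) * m)) ^ n"
      by (simp add: abs_mult power_abs power_mult_distrib divide_inverse mult_ac mult_left_mono)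
  qed
qed

lemma mpow_rowsum_ge:
  assumes fin: "finite A" and Nn: "\<forall>x\<in>A. \<forall>y\<in>A. N x y \<ge> 0"
    and rows: "\<forall>x\<in>A. (\<Sum>y\<in>A. N x y) \<ge> d" and d: "d \<ge> 0"
  shows "x \<in> A \<Longrightarrow> (\<Sum>z\<in>A. mpow A N n x z) \<ge> d ^ n"
proof (induction n arbitrary: x)
  case 0 then show ?case using fin by (simp add: sum.delta)
next
  case (Suc n)
  have eq: "(\<Sum>z\<in>A. mpow A N (Suc n) x z) = (\<Sum>y\<in>A. N x y * (\<Sum>z\<in>A. mpow A N n y z))"
  proof -
    have "(\<Sum>z\<in>A. mpow A N (Suc n) x z) = (\<Sum>z\<in>A. \<Sum>y\<in>A. N x y * mpow A N n y z)" by simp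
    also have "\<dots> = (\<Sum>y\<in>A. \<Sum>z\<in>A. N x y * mpow A N n y z)" by (rule sum.swap)
    finally show ?thesis by (simp add: sum_distrib_left)
  qed
  have "d * d ^ n \<le> (\<Sum>y\<in>A. N x y) * d ^ n" using rows Suc.prems d by (intro mult_right_mono) auto
  also have "\<dots> = (\<Sum>y\<in>A. N x y * d ^ n)" by (simp add: sum_distrib_right)
  also have "\<dots> \<le> (\<Sum>y\<in>A. N x y * (\<Sum>z\<in>A. mpow A N n y z))"
    by (rule sum_mono) (use Suc Nn in \<open>auto intro!: mult_left_mono\<close>)
  finally show ?case using eq by simp
qed

lemma mexp_lower:
  assumes fin: "finite A" and c: "c \<ge> 0" and t: "t \<ge> 0"
   and offd: "\<forall>x\<in>A. \<forall>y\<in>A. x \<noteq> y \<longrightarrow> M x y \<ge> 0"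
   and rows: "\<forall>x\<in>A. (\<Sum>y\<in>A. M x y) \<ge> -c"
   and x: "x \<in> A"
  shows "(\<Sum>z\<in>A. mexp A M t x z) \<ge> exp (-c * t)"
proof -
  define K where "K = c + (\<Sum>x\<in>A. \<Sum>y\<in>A. \<bar>M x y\<bar>)"
  define N where "N = (\<lambda>x y. M x y + (if x = y then K else 0))"
  define m where "m = (\<Sum>x\<in>A. \<Sum>y\<in>A. \<bar>M x y\<bar>) + K"
  have entry: "\<bar>M x y\<bar> \<le> (\<Sum>x\<in>A. \<Sum>y\<in>A. \<bar>M x y\<bar>)" if "x \<in> A" "y \<in> A" for x y
  proof -
    have "\<bar>M x y\<bar> \<le> (\<Sum>y\<in>A. \<bar>M x y\<bar>)" using fin that by (intro member_le_sum) auto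
    also have "\<dots> \<le> (\<Sum>x\<in>A. \<Sum>y\<in>A. \<bar>M x y\<bar>)" using fin that by (intro member_le_sum sum_nonneg) auto
    finally show ?thesis .
  qed
  have S0: "(\<Sum>x\<in>A. \<Sum>y\<in>A. \<bar>M x y\<bar>) \<ge> 0" by (intro sum_nonneg) auto
  have K0: "K \<ge> 0" using c S0 by (simp add: K_def)
  have mN: "\<forall>x\<in>A. \<forall>y\<in>A. \<bar>N x y\<bar> \<le> m"
  proof (intro ballI)
    fix x y assume "x \<in> A" "y \<in> A"
    then have "\<bar>M x y\<bar> \<le> (\<Sum>x\<in>A. \<Sum>y\<in>A. \<bar>M x y\<bar>)" by (rule entry)
    then show "\<bar>N x y\<bar> \<le> m" using K0 unfolding m_def N_def by (smt (verit))
  qed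
  have Nn: "\<forall>x\<in>A. \<forall>y\<in>A. N x y \<ge> 0"
  proof (intro ballI)
    fix x y assume xy: "x \<in> A" "y \<in> A"
    show "N x y \<ge> 0"
    proof (cases "x = y")
      case True
      have "- M x x \<le> K" using entry[OF xy(1) xy(1)] c by (simp add: K_def)
      then show ?thesis using True by (simp add: N_def)
    next
      case False then show ?thesis using offd xy by (simp add: N_def)
    qed
  qed
  have rowsN: "\<forall>x\<in>A. (\<Sum>y\<in>A. N x y) \<ge> K - c"
  proof
    fix x assume xA: "x \<in> A"
    have "(\<Sum>y\<in>A. N x y) = (\<Sum>y\<in>A. M x y) + (\<Sum>y\<in>A. if x = y then K else 0)"
      by (simp add: N_def sum.distrib)
    also have "(\<Sum>y\<in>A. if x = y then K else 0) = K" using fin xA by (simp add: sum.delta)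
    finally show "(\<Sum>y\<in>A. N x y) \<ge> K - c" using rows xA by auto
  qed
  have Kc: "K - c \<ge> 0" using S0 by (simp add: K_def)
  have MN: "\<forall>x\<in>A. \<forall>y\<in>A. M x y = N x y - (if x = y then K else 0)" by (simp add: N_def)
  have ident: "mexp A M t x z = exp (-K * t) * mexp A N t x z" if xA: "x \<in> A" for x z
  proof -
    define a where "a = (\<lambda>i. t ^ i / fact i * mpow A N i x z)"
    define bb where "bb = (\<lambda>j::nat. (-K * t) ^ j / fact j)"
    have sa: "summable (\<lambda>k. norm (a k))" unfolding a_def by (rule mexp_summable[OF fin mN xA])
    have sb: "summable (\<lambda>k. norm (bb k))" unfolding bb_def using summable_norm_exp[of "-K*t"]
      by (simp add: divide_inverse scaleR_conv_of_real mult_ac)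
    have eb: "(\<Sum>k. bb k) = exp (-K * t)" unfolding bb_def
      using exp_converges[of "-K*t"] by (simp add: sums_iff divide_inverse scaleR_conv_of_real mult_ac)
    have "(\<Sum>k. a k) * (\<Sum>k. bb k) = (\<Sum>k. \<Sum>i\<le>k. a i * bb (k - i))"
      by (rule Cauchy_product[OF sa sb])
    also have "\<dots> = (\<Sum>k. t ^ k / fact k * mpow A M k x z)"
    proof (rule suminf_cong)
      fix k
      have "t ^ k / fact k * mpow A M k x z
          = (\<Sum>i\<le>k. t ^ k / fact k * (real (k choose i) * (-K)^(k-i) * mpow A N i x z))"
        using mpow_binom[OF fin MN xA] by (simp add: sum_distrib_left)
      also have "\<dots> = (\<Sum>i\<le>k. a i * bb (k - i))"
      proof (rule sum.cong[OF refl])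
        fix i assume "i \<in> {..k}"
        then have ik: "i \<le> k" by simp
        have tk: "t ^ k = t ^ i * t ^ (k - i)" using ik by (simp add: power_add[symmetric])
        have ch: "real (k choose i) = fact k / (fact i * fact (k - i))" using binomial_fact[OF ik] by simp
        show "t ^ k / fact k * (real (k choose i) * (-K)^(k-i) * mpow A N i x z) = a i * bb (k - i)"
        proof -
          have "(-K * t) ^ (k - i) = (-K) ^ (k - i) * t ^ (k - i)" by (simp only: power_mult_distrib)
          then show ?thesis unfolding a_def bb_def ch tk by (simp add: field_simps)
        qed
      qed
      finally show "(\<Sum>i\<le>k. a i * bb (k - i)) = t ^ k / fact k * mpow A M k x z" by simp
    qed
    finally show ?thesis unfolding mexp_def a_def[symmetric] eb by (simp add: a_def mult.commute)
  qed
  have "(\<Sum>z\<in>A. mexp A N t x z) = (\<Sum>n. \<Sum>z\<in>A. t ^ n / fact n * mpow A N n x z)"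
    unfolding mexp_def
    by (rule suminf_sum[symmetric]) (rule summable_norm_cancel[OF mexp_summable[OF fin mN x]])
  also have "\<dots> \<ge> (\<Sum>n. t ^ n / fact n * (K - c) ^ n)"
  proof (rule suminf_le)
    fix n
    show "t ^ n / fact n * (K - c) ^ n \<le> (\<Sum>z\<in>A. t ^ n / fact n * mpow A N n x z)"
      unfolding sum_distrib_left[symmetric]
      using mpow_rowsum_ge[OF fin Nn rowsN Kc x, of n] t by (intro mult_left_mono) auto
    show "summable (\<lambda>n. t ^ n / fact n * (K - c) ^ n)"
      using summable_exp[of "t * (K - c)"] by (simp add: power_mult_distrib divide_inverse mult_ac)
    show "summable (\<lambda>n. \<Sum>z\<in>A. t ^ n / fact n * mpow A N n x z)"
      by (rule summable_sum) (rule summable_norm_cancel[OF mexp_summable[OF fin mN x]])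
  qed
  also have "(\<Sum>n. t ^ n / fact n * (K - c) ^ n) = exp (t * (K - c))"
    using exp_converges[of "t * (K - c)"] by (simp add: sums_iff power_mult_distrib divide_inverse scaleR_conv_of_real mult_ac)
  finally have e: "(\<Sum>z\<in>A. mexp A N t x z) \<ge> exp (t * (K - c))" .
  have "(\<Sum>z\<in>A. mexp A M t x z) = exp (-K * t) * (\<Sum>z\<in>A. mexp A N t x z)"
    using ident[OF x] by (simp add: sum_distrib_left)
  also have "\<dots> \<ge> exp (-K * t) * exp (t * (K - c))" using e by (intro mult_left_mono) auto
  also have "exp (-K * t) * exp (t * (K - c)) = exp (-c * t)" by (simp add: exp_add[symmetric] algebra_simps)
  finally show ?thesis by simp
qed




lemma stay_prob_lower:
  assumes fin: "finite S" and AS: "A \<subseteq> S" and c: "c \<ge> 0" and t: "t \<ge> 0" and z0: "z0 \<in> A"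
    and nonneg: "\<forall>z\<in>A. \<forall>z'\<in>A. z' \<noteq> z \<longrightarrow> Q z z' \<ge> 0"
    and leave: "\<forall>z\<in>A. (\<Sum>z'\<in>S - A. Q z z') \<le> c"
  shows "stay_prob S Q A z0 t \<ge> exp (-c * t)"
proof -
  define M where "M = (\<lambda>x y. if x = y then - (\<Sum>y'\<in>S - {x}. Q x y') else Q x y)"
  have finA: "finite A" using fin AS finite_subset by blast
  have rows: "\<forall>x\<in>A. (\<Sum>y\<in>A. M x y) \<ge> -c"
  proof
    fix x assume xA: "x \<in> A"
    have "(\<Sum>y\<in>A. M x y) = M x x + (\<Sum>y\<in>A - {x}. M x y)"
      using finA xA by (simp add: sum.remove)
    also have "(\<Sum>y\<in>A - {x}. M x y) = (\<Sum>y\<in>A - {x}. Q x y)"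
      by (rule sum.cong) (auto simp: M_def)
    also have "(\<Sum>y'\<in>S - {x}. Q x y') = (\<Sum>y\<in>A - {x}. Q x y) + (\<Sum>y\<in>S - A. Q x y)"
    proof -
      have "S - {x} = (A - {x}) \<union> (S - A)" using AS xA by auto
      moreover have "sum (Q x) (A - {x} \<union> (S - A)) = sum (Q x) (A - {x}) + sum (Q x) (S - A)"
        by (rule sum.union_disjoint) (use fin finA in auto)
      ultimately show ?thesis by simp
    qed
    then have "M x x = - ((\<Sum>y\<in>A - {x}. Q x y) + (\<Sum>y\<in>S - A. Q x y))" by (simp add: M_def)
    finally show "(\<Sum>y\<in>A. M x y) \<ge> -c" using leave xA by simp
  qed
  have offd: "\<forall>x\<in>A. \<forall>y\<in>A. x \<noteq> y \<longrightarrow> M x y \<ge> 0" using nonneg by (auto simp: M_def)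
  have "stay_prob S Q A z0 t = (\<Sum>z\<in>A. mexp A M t z0 z)" by (simp add: stay_prob_def M_def)
  also have "\<dots> \<ge> exp (-c * t)" by (rule mexp_lower[OF finA c t offd rows z0])
  finally show ?thesis .
qed

definition qm :: "'a set \<Rightarrow> ('a \<Rightarrow> 'a \<Rightarrow> real) \<Rightarrow> ('a \<Rightarrow> real) \<Rightarrow> 'a \<Rightarrow> real \<Rightarrow> real" where
  "qm S1 \<mu> f x k = (\<Sum>a\<in>S1 - {x}. if f a = k then \<mu> x a else 0)"

definition qp :: "'a set \<Rightarrow> 'b set \<Rightarrow> ('a \<Rightarrow> 'a \<Rightarrow> real) \<Rightarrow> ('b \<Rightarrow> 'b \<Rightarrow> real)
   \<Rightarrow> ('a \<Rightarrow> real) \<Rightarrow> ('b \<Rightarrow> real) \<Rightarrow> 'a \<times> 'b \<Rightarrow> 'a \<times> 'b \<Rightarrow> real" where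
  "qp S1 S2 \<mu> \<nu> f g z z' =
    (if fst z' \<noteq> fst z \<and> snd z' \<noteq> snd z \<and> f (fst z') = g (snd z')
       then \<mu> (fst z) (fst z') * \<nu> (snd z) (snd z')
         / max (qm S1 \<mu> f (fst z) (f (fst z'))) (qm S2 \<nu> g (snd z) (f (fst z'))) else 0)
  + (if fst z' \<noteq> fst z \<and> snd z' = snd z
       then \<mu> (fst z) (fst z') * (1 - qm S2 \<nu> g (snd z) (f (fst z'))
         / max (qm S1 \<mu> f (fst z) (f (fst z'))) (qm S2 \<nu> g (snd z) (f (fst z')))) else 0)
  + (if fst z' = fst z \<and> snd z' \<noteq> snd z
       then \<nu> (snd z) (snd z') * (1 - qm S1 \<mu> f (fst z) (g (snd z'))
         / max (qm S1 \<mu> f (fst z) (g (snd z'))) (qm S2 \<nu> g (snd z) (g (snd z')))) else 0)"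

lemma qp_pair: "qp S1 S2 \<mu> \<nu> f g (x, y) (x', y') =
    (if x' \<noteq> x \<and> y' \<noteq> y \<and> f x' = g y'
       then \<mu> x x' * \<nu> y y' / max (qm S1 \<mu> f x (f x')) (qm S2 \<nu> g y (f x')) else 0)
  + (if x' \<noteq> x \<and> y' = y
       then \<mu> x x' * (1 - qm S2 \<nu> g y (f x') / max (qm S1 \<mu> f x (f x')) (qm S2 \<nu> g y (f x'))) else 0)
  + (if x' = x \<and> y' \<noteq> y
       then \<nu> y y' * (1 - qm S1 \<mu> f x (g y') / max (qm S1 \<mu> f x (g y')) (qm S2 \<nu> g y (g y'))) else 0)"
  by (simp only: qp_def fst_conv snd_conv)

lemma qp_margX:
  assumes fin: "finite S2" and y: "y \<in> S2" and xx: "x' \<noteq> x"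
  shows "(\<Sum>y'\<in>S2. qp S1 S2 \<mu> \<nu> f g (x, y) (x', y')) = \<mu> x x'"
proof -
  let ?m = "qm S1 \<mu> f x (f x')" and ?n = "qm S2 \<nu> g y (f x')"
  let ?M = "max ?m ?n"
  have 1: "(\<Sum>y'\<in>S2. if x' \<noteq> x \<and> y' \<noteq> y \<and> f x' = g y' then \<mu> x x' * \<nu> y y' / ?M else 0)
      = \<mu> x x' / ?M * ?n"
  proof -
    have "(\<Sum>y'\<in>S2. if x' \<noteq> x \<and> y' \<noteq> y \<and> f x' = g y' then \<mu> x x' * \<nu> y y' / ?M else 0)
        = (\<Sum>y'\<in>S2 - {y}. \<mu> x x' / ?M * (if g y' = f x' then \<nu> y y' else 0))"
    proof -
      have "(\<Sum>y'\<in>S2. if x' \<noteq> x \<and> y' \<noteq> y \<and> f x' = g y' then \<mu> x x' * \<nu> y y' / ?M else 0)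
         = (\<Sum>y'\<in>S2 - {y}. if x' \<noteq> x \<and> y' \<noteq> y \<and> f x' = g y' then \<mu> x x' * \<nu> y y' / ?M else 0)"
        using fin y by (subst sum.remove[of _ y]) auto
      also have "\<dots> = (\<Sum>y'\<in>S2 - {y}. \<mu> x x' / ?M * (if g y' = f x' then \<nu> y y' else 0))"
      proof (rule sum.cong[OF refl])
        fix y' assume "y' \<in> S2 - {y}"
        then show "(if x' \<noteq> x \<and> y' \<noteq> y \<and> f x' = g y' then \<mu> x x' * \<nu> y y' / ?M else 0)
           = \<mu> x x' / ?M * (if g y' = f x' then \<nu> y y' else 0)"
          using xx by (cases "g y' = f x'") auto
      qed
      finally show ?thesis .
    qed
    also have "\<dots> = \<mu> x x' / ?M * ?n" by (simp add: qm_def sum_distrib_left)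
    finally show ?thesis .
  qed
  have 2: "(\<Sum>y'\<in>S2. if x' \<noteq> x \<and> y' = y then \<mu> x x' * (1 - ?n / ?M) else 0) = \<mu> x x' * (1 - ?n / ?M)"
    using fin y xx by (simp add: sum.delta')
  have "(\<Sum>y'\<in>S2. qp S1 S2 \<mu> \<nu> f g (x, y) (x', y')) =
     (\<Sum>y'\<in>S2. if x' \<noteq> x \<and> y' \<noteq> y \<and> f x' = g y' then \<mu> x x' * \<nu> y y' / ?M else 0)
     + (\<Sum>y'\<in>S2. if x' \<noteq> x \<and> y' = y then \<mu> x x' * (1 - ?n / ?M) else 0)"
    using xx by (simp only: qp_pair sum.distrib) simp
  also have "\<dots> = \<mu> x x'" unfolding 1 2 by (simp add: field_simps)
  finally show ?thesis .
qed

lemma qp_margY: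
  assumes fin: "finite S1" and x: "x \<in> S1" and yy: "y' \<noteq> y"
  shows "(\<Sum>x'\<in>S1. qp S1 S2 \<mu> \<nu> f g (x, y) (x', y')) = \<nu> y y'"
proof -
  let ?m = "qm S1 \<mu> f x (g y')" and ?n = "qm S2 \<nu> g y (g y')"
  let ?M = "max ?m ?n"
  have 1: "(\<Sum>x'\<in>S1. if x' \<noteq> x \<and> y' \<noteq> y \<and> f x' = g y' then \<mu> x x' * \<nu> y y' / max (qm S1 \<mu> f x (f x')) (qm S2 \<nu> g y (f x')) else 0)
      = \<nu> y y' / ?M * ?m"
  proof -
    have "(\<Sum>x'\<in>S1. if x' \<noteq> x \<and> y' \<noteq> y \<and> f x' = g y' then \<mu> x x' * \<nu> y y' / max (qm S1 \<mu> f x (f x')) (qm S2 \<nu> g y (f x')) else 0)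
        = (\<Sum>x'\<in>S1 - {x}. \<nu> y y' / ?M * (if f x' = g y' then \<mu> x x' else 0))"
    proof -
      have "(\<Sum>x'\<in>S1. if x' \<noteq> x \<and> y' \<noteq> y \<and> f x' = g y' then \<mu> x x' * \<nu> y y' / max (qm S1 \<mu> f x (f x')) (qm S2 \<nu> g y (f x')) else 0)
         = (\<Sum>x'\<in>S1 - {x}. if x' \<noteq> x \<and> y' \<noteq> y \<and> f x' = g y' then \<mu> x x' * \<nu> y y' / max (qm S1 \<mu> f x (f x')) (qm S2 \<nu> g y (f x')) else 0)"
        using fin x by (subst sum.remove[of _ x]) auto
      also have "\<dots> = (\<Sum>x'\<in>S1 - {x}. \<nu> y y' / ?M * (if f x' = g y' then \<mu> x x' else 0))"
      proof (rule sum.cong[OF refl])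
        fix x' assume "x' \<in> S1 - {x}"
        then show "(if x' \<noteq> x \<and> y' \<noteq> y \<and> f x' = g y' then \<mu> x x' * \<nu> y y' / max (qm S1 \<mu> f x (f x')) (qm S2 \<nu> g y (f x')) else 0)
           = \<nu> y y' / ?M * (if f x' = g y' then \<mu> x x' else 0)"
          using yy by (cases "f x' = g y'") auto
      qed
      finally show ?thesis .
    qed
    also have "\<dots> = \<nu> y y' / ?M * ?m" by (simp add: qm_def sum_distrib_left)
    finally show ?thesis .
  qed
  have 2: "(\<Sum>x'\<in>S1. if x' = x \<and> y' \<noteq> y then \<nu> y y' * (1 - ?m / ?M) else 0) = \<nu> y y' * (1 - ?m / ?M)"
    using fin x yy by (simp add: sum.delta')
  have "(\<Sum>x'\<in>S1. qp S1 S2 \<mu> \<nu> f g (x, y) (x', y')) =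
     (\<Sum>x'\<in>S1. if x' \<noteq> x \<and> y' \<noteq> y \<and> f x' = g y' then \<mu> x x' * \<nu> y y' / max (qm S1 \<mu> f x (f x')) (qm S2 \<nu> g y (f x')) else 0)
     + (\<Sum>x'\<in>S1. if x' = x \<and> y' \<noteq> y then \<nu> y y' * (1 - ?m / ?M) else 0)"
    using yy by (simp only: qp_pair sum.distrib) simp
  also have "\<dots> = \<nu> y y'" unfolding 1 2 by (simp add: field_simps)
  finally show ?thesis .
qed

lemma qm_nonneg: "(\<forall>a b. \<mu> a b \<ge> 0) \<Longrightarrow> qm S \<mu> f x k \<ge> 0"
  unfolding qm_def by (intro sum_nonneg) auto

lemma frac_le1: assumes "(n::real) \<ge> 0" "m \<ge> 0" shows "n / max m n \<le> 1"
  proof (cases "max m n = 0")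
  case True then show ?thesis by simp
next
  case False then have "max m n > 0" using assms by (auto simp: max_def)
  then show ?thesis by (simp add: divide_le_eq_1)
qed

lemma qp_nonneg:
  assumes "\<forall>a b. \<mu> a b \<ge> 0" "\<forall>a b. \<nu> a b \<ge> 0"
  shows "qp S1 S2 \<mu> \<nu> f g z z' \<ge> 0"
proof -
  have m: "\<And>x k. qm S1 \<mu> f x k \<ge> 0" and n: "\<And>y k. qm S2 \<nu> g y k \<ge> 0"
    using assms by (simp_all add: qm_nonneg)
  show ?thesis unfolding qp_def
  proof (intro add_nonneg_nonneg)
    have M: "\<And>x y a b. 0 \<le> max (qm S1 \<mu> f x a) (qm S2 \<nu> g y b)" using m by (meson le_max_iff_disj)
    show "0 \<le> (if fst z' \<noteq> fst z \<and> snd z' \<noteq> snd z \<and> f (fst z') = g (snd z')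
       then \<mu> (fst z) (fst z') * \<nu> (snd z) (snd z')
         / max (qm S1 \<mu> f (fst z) (f (fst z'))) (qm S2 \<nu> g (snd z) (f (fst z'))) else 0)"
      using assms M by (simp add: divide_nonneg_nonneg)
    have a: "qm S2 \<nu> g (snd z) (f (fst z')) / max (qm S1 \<mu> f (fst z) (f (fst z'))) (qm S2 \<nu> g (snd z) (f (fst z'))) \<le> 1"
      by (rule frac_le1[OF n m])
    show "0 \<le> (if fst z' \<noteq> fst z \<and> snd z' = snd z
       then \<mu> (fst z) (fst z') * (1 - qm S2 \<nu> g (snd z) (f (fst z'))
         / max (qm S1 \<mu> f (fst z) (f (fst z'))) (qm S2 \<nu> g (snd z) (f (fst z')))) else 0)"
      using assms a by simp
    have b: "qm S1 \<mu> f (fst z) (g (snd z')) / max (qm S1 \<mu> f (fst z) (g (snd z'))) (qm S2 \<nu> g (snd z) (g (snd z'))) \<le> 1"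
      using frac_le1[OF m n] by (simp add: max.commute)
    show "0 \<le> (if fst z' = fst z \<and> snd z' \<noteq> snd z
       then \<nu> (snd z) (snd z') * (1 - qm S1 \<mu> f (fst z) (g (snd z'))
         / max (qm S1 \<mu> f (fst z) (g (snd z'))) (qm S2 \<nu> g (snd z) (g (snd z')))) else 0)"
      using assms b by simp
  qed
qed

lemma alg_tv:
  assumes "(m::real) \<ge> 0" "n \<ge> 0"
  shows "m * (1 - n / max m n) + n * (1 - m / max m n) = \<bar>m - n\<bar>"
proof (cases "m \<le> n")
  case True
  show ?thesis
  proof (cases "n = 0")
    case True then show ?thesis using \<open>m \<le> n\<close> assms by simp
  next
    case False then show ?thesis using \<open>m \<le> n\<close> assms by (simp add: max_def field_simps)
  qed
next
  case False
  then have "m > 0" using assms by simp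
  then show ?thesis using False assms by (simp add: max_def field_simps)
qed

lemma qp_leave:
  assumes fin1: "finite S1" and fin2: "finite S2" and x: "x \<in> S1" and y: "y \<in> S2"
    and \<mu>0: "\<forall>a b. \<mu> a b \<ge> 0" and \<nu>0: "\<forall>a b. \<nu> a b \<ge> 0"
    and C1: "\<forall>x'\<in>S1. \<forall>y'\<in>S2. x' \<noteq> x \<longrightarrow> y' \<noteq> y \<longrightarrow> \<mu> x x' > 0 \<longrightarrow> \<nu> y y' > 0 \<longrightarrow> f x' = g y' \<longrightarrow> (x', y') \<in> A"
    and C2: "\<forall>x'\<in>S1. x' \<noteq> x \<longrightarrow> \<mu> x x' > 0 \<longrightarrow> (x', y) \<notin> A \<longrightarrow> f x' = k1"
    and C3: "\<forall>y'\<in>S2. y' \<noteq> y \<longrightarrow> \<nu> y y' > 0 \<longrightarrow> (x, y') \<notin> A \<longrightarrow> g y' = k1"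
  shows "(\<Sum>z'\<in>S1 \<times> S2 - A. qp S1 S2 \<mu> \<nu> f g (x, y) z') \<le> \<bar>qm S1 \<mu> f x k1 - qm S2 \<nu> g y k1\<bar>"
proof -
  define m where "m = qm S1 \<mu> f x k1"
  define n where "n = qm S2 \<nu> g y k1"
  have m0: "m \<ge> 0" unfolding m_def using \<mu>0 by (rule qm_nonneg)
  have n0: "n \<ge> 0" unfolding n_def using \<nu>0 by (rule qm_nonneg)
  define \<alpha> where "\<alpha> = 1 - n / max m n"
  define \<beta> where "\<beta> = 1 - m / max m n"
  have \<alpha>0: "\<alpha> \<ge> 0" unfolding \<alpha>_def using frac_le1[OF n0 m0] by simp
  have \<beta>0: "\<beta> \<ge> 0" unfolding \<beta>_def using frac_le1[OF m0 n0] by (simp add: max.commute)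
  define bd where "bd = (\<lambda>z'. (if fst z' \<noteq> x \<and> snd z' = y \<and> f (fst z') = k1 then \<mu> x (fst z') * \<alpha> else 0)
      + (if fst z' = x \<and> snd z' \<noteq> y \<and> g (snd z') = k1 then \<nu> y (snd z') * \<beta> else 0))"
  have bd0: "bd z' \<ge> 0" for z' unfolding bd_def using \<mu>0 \<nu>0 \<alpha>0 \<beta>0 by auto
  have pt: "qp S1 S2 \<mu> \<nu> f g (x, y) z' \<le> bd z'" if z': "z' \<in> S1 \<times> S2 - A" for z'
  proof -
    obtain x' y' where zz: "z' = (x', y')" by (cases z')
    have x': "x' \<in> S1" and y': "y' \<in> S2" and nA: "(x', y') \<notin> A" using z' zz by auto
    have t1: "(if x' \<noteq> x \<and> y' \<noteq> y \<and> f x' = g y'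
       then \<mu> x x' * \<nu> y y' / max (qm S1 \<mu> f x (f x')) (qm S2 \<nu> g y (f x')) else 0) = 0"
    proof (cases "x' \<noteq> x \<and> y' \<noteq> y \<and> f x' = g y'")
      case True
      then have "\<not> (\<mu> x x' > 0 \<and> \<nu> y y' > 0)" using C1 x' y' nA by blast
      then have "\<mu> x x' = 0 \<or> \<nu> y y' = 0" using \<mu>0 \<nu>0 by (metis order_le_less)
      then show ?thesis by auto
    qed auto
    have t2: "(if x' \<noteq> x \<and> y' = y
       then \<mu> x x' * (1 - qm S2 \<nu> g y (f x') / max (qm S1 \<mu> f x (f x')) (qm S2 \<nu> g y (f x'))) else 0)
       = (if x' \<noteq> x \<and> y' = y \<and> f x' = k1 then \<mu> x x' * \<alpha> else 0)"
    proof (cases "x' \<noteq> x \<and> y' = y")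
      case True
      show ?thesis
      proof (cases "\<mu> x x' = 0")
        case False
        then have "\<mu> x x' > 0" using \<mu>0 by (metis order_le_less)
        then have "f x' = k1" using C2 x' True nA by blast
        then show ?thesis using True by (simp add: \<alpha>_def m_def n_def)
      qed auto
    qed auto
    have t3: "(if x' = x \<and> y' \<noteq> y
       then \<nu> y y' * (1 - qm S1 \<mu> f x (g y') / max (qm S1 \<mu> f x (g y')) (qm S2 \<nu> g y (g y'))) else 0)
       = (if x' = x \<and> y' \<noteq> y \<and> g y' = k1 then \<nu> y y' * \<beta> else 0)"
    proof (cases "x' = x \<and> y' \<noteq> y")
      case True
      show ?thesis
      proof (cases "\<nu> y y' = 0")
        case False
        then have "\<nu> y y' > 0" using \<nu>0 by (metis order_le_less)
        then have "g y' = k1" using C3 y' True nA by blast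
        then show ?thesis using True by (simp add: \<beta>_def m_def n_def)
      qed auto
    qed auto
    show ?thesis unfolding zz qp_pair t1 t2 t3 bd_def by simp
  qed
  have "(\<Sum>z'\<in>S1 \<times> S2 - A. qp S1 S2 \<mu> \<nu> f g (x, y) z') \<le> (\<Sum>z'\<in>S1 \<times> S2 - A. bd z')"
    by (rule sum_mono) (rule pt)
  also have "\<dots> \<le> (\<Sum>z'\<in>S1 \<times> S2. bd z')"
    by (rule sum_mono2) (use fin1 fin2 bd0 in auto)
  also have "(\<Sum>z'\<in>S1 \<times> S2. bd z') = \<alpha> * m + \<beta> * n"
  proof -
    have "(\<Sum>z'\<in>S1 \<times> S2. bd z') = (\<Sum>x'\<in>S1. \<Sum>y'\<in>S2. bd (x', y'))"
      using sum.cartesian_product[of "\<lambda>a b. bd (a, b)" S2 S1] by simp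
    also have "\<dots> = (\<Sum>x'\<in>S1. (if x' \<noteq> x \<and> f x' = k1 then \<mu> x x' * \<alpha> else 0)
                      + (if x' = x then \<beta> * n else 0))"
    proof (rule sum.cong[OF refl])
      fix x' assume "x' \<in> S1"
      have a: "(\<Sum>y'\<in>S2. if x' \<noteq> x \<and> y' = y \<and> f x' = k1 then \<mu> x x' * \<alpha> else 0)
          = (if x' \<noteq> x \<and> f x' = k1 then \<mu> x x' * \<alpha> else 0)"
        using fin2 y by (cases "x' \<noteq> x \<and> f x' = k1") (auto simp add: sum.delta')
      have b: "(\<Sum>y'\<in>S2. if x' = x \<and> y' \<noteq> y \<and> g y' = k1 then \<nu> y y' * \<beta> else 0)
          = (if x' = x then \<beta> * n else 0)"
      proof (cases "x' = x")
        case True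
        have "(\<Sum>y'\<in>S2. if x' = x \<and> y' \<noteq> y \<and> g y' = k1 then \<nu> y y' * \<beta> else 0)
            = (\<Sum>y'\<in>S2 - {y}. \<beta> * (if g y' = k1 then \<nu> y y' else 0))"
          using fin2 y True by (subst sum.remove[of _ y]) (auto intro!: sum.cong split: if_split_asm)
        then show ?thesis using True by (simp add: n_def qm_def sum_distrib_left)
      qed simp
      show "(\<Sum>y'\<in>S2. bd (x', y')) = (if x' \<noteq> x \<and> f x' = k1 then \<mu> x x' * \<alpha> else 0)
                      + (if x' = x then \<beta> * n else 0)"
        unfolding bd_def fst_conv snd_conv sum.distrib a b by simp
    qed
    also have "\<dots> = (\<Sum>x'\<in>S1. if x' \<noteq> x \<and> f x' = k1 then \<mu> x x' * \<alpha> else 0) + \<beta> * n"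
      using fin1 x by (simp add: sum.distrib sum.delta')
    also have "(\<Sum>x'\<in>S1. if x' \<noteq> x \<and> f x' = k1 then \<mu> x x' * \<alpha> else 0) = \<alpha> * m"
    proof -
      have "(\<Sum>x'\<in>S1. if x' \<noteq> x \<and> f x' = k1 then \<mu> x x' * \<alpha> else 0)
          = (\<Sum>x'\<in>S1 - {x}. \<alpha> * (if f x' = k1 then \<mu> x x' else 0))"
        using fin1 x by (subst sum.remove[of _ x]) (auto intro!: sum.cong split: if_split_asm)
      then show ?thesis by (simp add: m_def qm_def sum_distrib_left)
    qed
    finally show ?thesis .
  qed
  also have "\<alpha> * m + \<beta> * n = \<bar>m - n\<bar>" unfolding \<alpha>_def \<beta>_def using alg_tv[OF m0 n0] by (simp add: mult.commute)
  finally show ?thesis by (simp add: m_def n_def)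
qed




definition cset :: "nat list set \<Rightarrow> nat list set \<Rightarrow> (nat list \<Rightarrow> real) \<Rightarrow> (nat list \<Rightarrow> real) set" where
  "cset V B \<sigma> = {\<eta> \<in> confs V. \<forall>u\<in>V - B. \<eta> u = \<sigma> u}"

definition PE :: "real \<Rightarrow> (nat list \<times> nat list) set \<Rightarrow> (nat list \<Rightarrow> real) \<Rightarrow> real" where
  "PE \<theta> E \<eta> = (\<Prod>e\<in>E. 1 + \<theta> * \<eta> (fst e) * \<eta> (snd e))"

definition flip :: "nat list set \<Rightarrow> (nat list \<Rightarrow> real) \<Rightarrow> (nat list \<Rightarrow> real)" where
  "flip D \<eta> = (\<lambda>u. if u \<in> D then - \<eta> u else \<eta> u)"

lemma confs_val: "\<eta> \<in> confs V \<Longrightarrow> \<eta> u = 1 \<or> \<eta> u = -1"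
  unfolding confs_def by (cases "u \<in> V") auto

lemma confs_sq: "\<eta> \<in> confs V \<Longrightarrow> \<eta> u * \<eta> u = 1"
  using confs_val[of \<eta> V u] by auto

lemma finite_confs:
  assumes "finite V" shows "finite (confs V)"
proof -
  have "confs V \<subseteq> {f. \<forall>x. (x \<in> V \<longrightarrow> f x \<in> {1, -1::real}) \<and> (x \<notin> V \<longrightarrow> f x = 1)}"
    by (auto simp: confs_def)
  moreover have "finite {f. \<forall>x. (x \<in> V \<longrightarrow> f x \<in> {1, -1::real}) \<and> (x \<notin> V \<longrightarrow> f x = 1)}"
    using assms by (intro finite_set_of_finite_funs) auto
  ultimately show ?thesis using finite_subset by blast
qed

lemma finite_cset: "finite V \<Longrightarrow> finite (cset V B \<sigma>)"
  unfolding cset_def using finite_confs by auto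

lemma cset_sub: "cset V B \<sigma> \<subseteq> confs V" by (auto simp: cset_def)

lemma flip_flip[simp]: "flip D (flip D \<eta>) = \<eta>"
  by (auto simp: flip_def)

lemma flip_cset:
  assumes "D \<subseteq> B" "D \<subseteq> V" "\<eta> \<in> cset V B \<sigma>"
  shows "flip D \<eta> \<in> cset V B \<sigma>"
  using assms unfolding cset_def confs_def flip_def by auto

lemma sum_flip_zero:
  fixes F :: "(nat list \<Rightarrow> real) \<Rightarrow> real"
  assumes fin: "finite V" and D: "D \<subseteq> B" "D \<subseteq> V"
    and odd: "\<And>\<eta>. \<eta> \<in> cset V B \<sigma> \<Longrightarrow> F (flip D \<eta>) = - F \<eta>"
  shows "(\<Sum>\<eta>\<in>cset V B \<sigma>. F \<eta>) = 0"
proof -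
  have "(\<Sum>\<eta>\<in>cset V B \<sigma>. F \<eta>) = (\<Sum>\<eta>\<in>cset V B \<sigma>. F (flip D \<eta>))"
    by (rule sum.reindex_bij_witness[where i = "flip D" and j = "flip D"])
       (auto intro: flip_cset[OF D])
  also have "\<dots> = (\<Sum>\<eta>\<in>cset V B \<sigma>. - F \<eta>)" by (rule sum.cong) (auto simp: odd)
  also have "\<dots> = - (\<Sum>\<eta>\<in>cset V B \<sigma>. F \<eta>)" by (simp add: sum_negf)
  finally show ?thesis by simp
qed

lemma PE_remove: "finite E \<Longrightarrow> e0 \<in> E \<Longrightarrow>
   PE \<theta> E \<eta> = (1 + \<theta> * \<eta> (fst e0) * \<eta> (snd e0)) * PE \<theta> (E - {e0}) \<eta>"
  unfolding PE_def by (rule prod.remove)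

lemma PE_flip_inv:
  assumes "\<forall>e\<in>E. fst e \<in> D \<longleftrightarrow> snd e \<in> D"
  shows "PE \<theta> E (flip D \<eta>) = PE \<theta> E \<eta>"
  unfolding PE_def flip_def
  by (rule prod.cong[OF refl]) (use assms in auto)

lemma cut_edge:
  assumes fin: "finite V" and finE: "finite E" and D: "D \<subseteq> B" "D \<subseteq> V"
    and ed: "ed \<in> E" and cross: "(fst ed \<in> D) \<noteq> (snd ed \<in> D)"
    and rest: "\<forall>e\<in>E - {ed}. fst e \<in> D \<longleftrightarrow> snd e \<in> D"
    and ginv: "\<And>\<eta>. \<eta> \<in> cset V B \<sigma> \<Longrightarrow> g (flip D \<eta>) = g \<eta>"
  shows "(\<Sum>\<eta>\<in>cset V B \<sigma>. g \<eta> * PE \<theta> E \<eta>) = (\<Sum>\<eta>\<in>cset V B \<sigma>. g \<eta> * PE \<theta> (E - {ed}) \<eta>)"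
proof -
  have z: "(\<Sum>\<eta>\<in>cset V B \<sigma>. g \<eta> * (\<theta> * \<eta> (fst ed) * \<eta> (snd ed)) * PE \<theta> (E - {ed}) \<eta>) = 0"
  proof (rule sum_flip_zero[OF fin D])
    fix \<eta> assume "\<eta> \<in> cset V B \<sigma>"
    then have "g (flip D \<eta>) = g \<eta>" by (rule ginv)
    moreover have "PE \<theta> (E - {ed}) (flip D \<eta>) = PE \<theta> (E - {ed}) \<eta>" by (rule PE_flip_inv[OF rest])
    moreover have "flip D \<eta> (fst ed) * flip D \<eta> (snd ed) = - (\<eta> (fst ed) * \<eta> (snd ed))"
      using cross by (auto simp: flip_def)
    ultimately show "g (flip D \<eta>) * (\<theta> * flip D \<eta> (fst ed) * flip D \<eta> (snd ed)) * PE \<theta> (E - {ed}) (flip D \<eta>)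
        = - (g \<eta> * (\<theta> * \<eta> (fst ed) * \<eta> (snd ed)) * PE \<theta> (E - {ed}) \<eta>)"
      by (simp add: mult.assoc)
  qed
  have "(\<Sum>\<eta>\<in>cset V B \<sigma>. g \<eta> * PE \<theta> E \<eta>)
      = (\<Sum>\<eta>\<in>cset V B \<sigma>. g \<eta> * PE \<theta> (E - {ed}) \<eta> + g \<eta> * (\<theta> * \<eta> (fst ed) * \<eta> (snd ed)) * PE \<theta> (E - {ed}) \<eta>)"
    by (rule sum.cong[OF refl]) (simp add: PE_remove[OF finE ed] algebra_simps)
  also have "\<dots> = (\<Sum>\<eta>\<in>cset V B \<sigma>. g \<eta> * PE \<theta> (E - {ed}) \<eta>)"
    using z by (simp add: sum.distrib)
  finally show ?thesis .
qed


lemma move_edge: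
  assumes fin: "finite V" and finE: "finite E" and u: "u \<in> B" "u \<in> V"
    and ed: "ed \<in> E" and ends: "(fst ed = u \<and> snd ed = u') \<or> (snd ed = u \<and> fst ed = u')" and uu: "u' \<noteq> u"
    and rest: "\<forall>e\<in>E - {ed}. fst e = u \<longleftrightarrow> snd e = u"
    and ginv: "\<And>\<eta>. \<eta> \<in> cset V B \<sigma> \<Longrightarrow> g (flip {u} \<eta>) = g \<eta>"
  shows "(\<Sum>\<eta>\<in>cset V B \<sigma>. g \<eta> * \<eta> u * PE \<theta> E \<eta>) = \<theta> * (\<Sum>\<eta>\<in>cset V B \<sigma>. g \<eta> * \<eta> u' * PE \<theta> (E - {ed}) \<eta>)"
proof -
  have D: "{u} \<subseteq> B" "{u} \<subseteq> V" using u by auto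
  have rest': "\<forall>e\<in>E - {ed}. fst e \<in> {u} \<longleftrightarrow> snd e \<in> {u}" using rest by auto
  have z: "(\<Sum>\<eta>\<in>cset V B \<sigma>. g \<eta> * \<eta> u * PE \<theta> (E - {ed}) \<eta>) = 0"
  proof (rule sum_flip_zero[OF fin D])
    fix \<eta> assume "\<eta> \<in> cset V B \<sigma>"
    then have "g (flip {u} \<eta>) = g \<eta>" by (rule ginv)
    moreover have "PE \<theta> (E - {ed}) (flip {u} \<eta>) = PE \<theta> (E - {ed}) \<eta>" by (rule PE_flip_inv[OF rest'])
    ultimately show "g (flip {u} \<eta>) * flip {u} \<eta> u * PE \<theta> (E - {ed}) (flip {u} \<eta>)
        = - (g \<eta> * \<eta> u * PE \<theta> (E - {ed}) \<eta>)"
      by (simp add: flip_def)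
  qed
  have "(\<Sum>\<eta>\<in>cset V B \<sigma>. g \<eta> * \<eta> u * PE \<theta> E \<eta>)
      = (\<Sum>\<eta>\<in>cset V B \<sigma>. g \<eta> * \<eta> u * PE \<theta> (E - {ed}) \<eta> + \<theta> * (g \<eta> * \<eta> u' * PE \<theta> (E - {ed}) \<eta>))"
  proof (rule sum.cong[OF refl])
    fix \<eta> assume "\<eta> \<in> cset V B \<sigma>"
    then have sq: "\<eta> u * \<eta> u = 1" using cset_sub confs_sq by blast
    have "\<eta> u * (\<eta> (fst ed) * \<eta> (snd ed)) = \<eta> u'"
      using ends sq uu by (metis mult.assoc mult.commute mult_1_left)
    then show "g \<eta> * \<eta> u * PE \<theta> E \<eta> = g \<eta> * \<eta> u * PE \<theta> (E - {ed}) \<eta> + \<theta> * (g \<eta> * \<eta> u' * PE \<theta> (E - {ed}) \<eta>)"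
      by (simp add: PE_remove[OF finE ed] algebra_simps)
  qed
  also have "\<dots> = \<theta> * (\<Sum>\<eta>\<in>cset V B \<sigma>. g \<eta> * \<eta> u' * PE \<theta> (E - {ed}) \<eta>)"
    using z by (simp add: sum.distrib sum_distrib_left)
  finally show ?thesis .
qed


lemma exp_pm:
  fixes \<beta> t :: real
  assumes "t = 1 \<or> t = -1"
  shows "exp (\<beta> * t) = cosh \<beta> * (1 + tanh \<beta> * t)"
proof -
  have c: "cosh \<beta> \<noteq> 0" using cosh_real_pos[of \<beta>] by linarith
  have "cosh \<beta> * (1 + tanh \<beta> * t) = cosh \<beta> + sinh \<beta> * t" using c by (simp add: tanh_def field_simps)
  then show ?thesis using assms cosh_plus_sinh[of \<beta>] cosh_minus_sinh[of \<beta>] by auto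
qed

lemma edges_sub: "edges V \<subseteq> V \<times> V" by (auto simp: edges_def)

lemma finite_edges: "finite V \<Longrightarrow> finite (edges V)"
  using edges_sub finite_subset by (metis finite_SigmaI)

lemma gw_PE:
  assumes fin: "finite V" and \<eta>: "\<eta> \<in> confs V"
  shows "gibbs_weight \<beta> V \<eta> = cosh \<beta> ^ card (edges V) * PE (tanh \<beta>) (edges V) \<eta>"
proof -
  have "gibbs_weight \<beta> V \<eta> = exp (\<Sum>e\<in>edges V. \<beta> * (\<eta> (fst e) * \<eta> (snd e)))"
    by (simp add: gibbs_weight_def sum_distrib_left)
  also have "\<dots> = (\<Prod>e\<in>edges V. exp (\<beta> * (\<eta> (fst e) * \<eta> (snd e))))"
    using finite_edges[OF fin] by (rule exp_sum)
  also have "\<dots> = (\<Prod>e\<in>edges V. cosh \<beta> * (1 + tanh \<beta> * \<eta> (fst e) * \<eta> (snd e)))"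
  proof (rule prod.cong[OF refl])
    fix e assume "e \<in> edges V"
    have "\<eta> (fst e) * \<eta> (snd e) = 1 \<or> \<eta> (fst e) * \<eta> (snd e) = -1"
      using confs_val[OF \<eta>, of "fst e"] confs_val[OF \<eta>, of "snd e"] by auto
    then show "exp (\<beta> * (\<eta> (fst e) * \<eta> (snd e))) = cosh \<beta> * (1 + tanh \<beta> * \<eta> (fst e) * \<eta> (snd e))"
      using exp_pm by (simp add: mult.assoc)
  qed
  also have "\<dots> = cosh \<beta> ^ card (edges V) * PE (tanh \<beta>) (edges V) \<eta>"
    by (simp add: PE_def prod.distrib)
  finally show ?thesis .
qed

lemma gw_pos: "gibbs_weight \<beta> V \<eta> > 0" by (simp add: gibbs_weight_def)

lemma kernel_marg:
  assumes fin: "finite V" and \<sigma>: "\<sigma> \<in> confs V"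
  shows "(\<Sum>\<eta>\<in>{\<eta>\<in>confs V. \<eta> w = s}. block_kernel \<beta> V B \<sigma> \<eta>)
     = (\<Sum>\<eta>\<in>{\<eta>\<in>cset V B \<sigma>. \<eta> w = s}. PE (tanh \<beta>) (edges V) \<eta>) / (\<Sum>\<eta>\<in>cset V B \<sigma>. PE (tanh \<beta>) (edges V) \<eta>)"
proof -
  let ?E = "edges V" and ?\<theta> = "tanh \<beta>"
  define Z where "Z = (\<Sum>\<eta>\<in>confs V. gibbs_weight \<beta> V \<eta>)"
  define K where "K = cosh \<beta> ^ card ?E"
  have K0: "K > 0" by (simp add: K_def)
  have Z0: "Z > 0" unfolding Z_def
    using finite_confs[OF fin] \<sigma> gw_pos by (intro sum_pos) auto
  have isg: "ising \<beta> V \<eta> = K * PE ?\<theta> ?E \<eta> / Z" if "\<eta> \<in> confs V" for \<eta>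
    using that gw_PE[OF fin that] by (simp add: ising_def Z_def K_def)
  have cs: "{\<eta> \<in> confs V. \<forall>u\<in>V - B. \<eta> u = \<sigma> u} = cset V B \<sigma>" by (simp add: cset_def)
  define S where "S = (\<Sum>\<eta>\<in>cset V B \<sigma>. PE ?\<theta> ?E \<eta>)"
  have den: "(\<Sum>\<eta>\<in>cset V B \<sigma>. ising \<beta> V \<eta>) = K * S / Z"
    unfolding S_def sum_distrib_left sum_divide_distrib
    by (rule sum.cong[OF refl]) (use isg cset_sub in blast)
  have bk: "block_kernel \<beta> V B \<sigma> \<eta> = (if \<eta> \<in> cset V B \<sigma> then PE ?\<theta> ?E \<eta> / S else 0)" for \<eta>
  proof (cases "\<eta> \<in> cset V B \<sigma>")
    case True
    then have "\<eta> \<in> confs V" using cset_sub by blast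
    then show ?thesis using True K0 Z0 unfolding block_kernel_def cs den
      by (simp add: isg cset_def)
  next
    case False then show ?thesis unfolding block_kernel_def by (auto simp add: cset_def)
  qed
  have "(\<Sum>\<eta>\<in>{\<eta>\<in>confs V. \<eta> w = s}. block_kernel \<beta> V B \<sigma> \<eta>)
      = (\<Sum>\<eta>\<in>{\<eta>\<in>confs V. \<eta> w = s}. if \<eta> \<in> cset V B \<sigma> then PE ?\<theta> ?E \<eta> / S else 0)"
    by (simp add: bk)
  also have "\<dots> = (\<Sum>\<eta>\<in>{\<eta>\<in>confs V. \<eta> w = s} \<inter> cset V B \<sigma>. PE ?\<theta> ?E \<eta> / S)"
    using finite_confs[OF fin] by (simp add: sum.inter_restrict)
  also have "{\<eta>\<in>confs V. \<eta> w = s} \<inter> cset V B \<sigma> = {\<eta>\<in>cset V B \<sigma>. \<eta> w = s}"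
    using cset_sub by blast
  finally show ?thesis by (simp add: S_def sum_divide_distrib)
qed

definition pedges :: "nat list \<Rightarrow> nat \<Rightarrow> nat \<Rightarrow> (nat list \<times> nat list) set" where
  "pedges w l k = {(take j w, take (Suc j) w) | j. l \<le> j \<and> j < l + k}"

lemma pedges_Suc: "pedges w l (Suc k) = insert (take (l + k) w, take (Suc (l + k)) w) (pedges w l k)"
  unfolding pedges_def by (auto simp: less_Suc_eq)

lemma finite_pedges: "finite (pedges w l k)"
proof -
  have "pedges w l k = (\<lambda>j. (take j w, take (Suc j) w)) ` {l..<l+k}" unfolding pedges_def by auto
  then show ?thesis by simp
qed

lemma take_inj: "i \<le> length w \<Longrightarrow> j \<le> length w \<Longrightarrow> take i w = take j w \<Longrightarrow> i = j"
  by (metis length_take min.absorb2)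

lemma path_cut:
  fixes w :: "nat list" and \<theta> :: real
  assumes fin: "finite V" and finE: "finite E0" and lr: "l \<le> r" and rw: "r = length w"
    and pathB: "\<forall>j. l \<le> j \<and> j < r \<longrightarrow> take j w \<in> B \<and> take j w \<in> V"
    and PEsub: "\<forall>j. l \<le> j \<and> j < r \<longrightarrow> (take j w, take (Suc j) w) \<in> E0"
    and touch: "\<forall>j. l \<le> j \<and> j < r \<longrightarrow> (\<forall>e\<in>E0. (fst e = take j w \<or> snd e = take j w) \<longrightarrow>
                  (\<exists>j'. l \<le> j' \<and> j' < r \<and> e = (take j' w, take (Suc j') w)))"
  shows "k \<le> r - l \<Longrightarrow>
     (\<Sum>\<eta>\<in>cset V B \<sigma>. (if \<eta> w = s then 1 else 0) * PE \<theta> E0 \<eta>)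
       = (\<Sum>\<eta>\<in>cset V B \<sigma>. (if \<eta> w = s then 1 else 0) * PE \<theta> (E0 - pedges w l k) \<eta>)
   \<and> (\<Sum>\<eta>\<in>cset V B \<sigma>. (if \<eta> w = s then 1 else 0) * \<eta> (take l w) * PE \<theta> E0 \<eta>)
       = \<theta> ^ k * (\<Sum>\<eta>\<in>cset V B \<sigma>. (if \<eta> w = s then 1 else 0) * \<eta> (take (l + k) w) * PE \<theta> (E0 - pedges w l k) \<eta>)"
proof (induction k)
  case 0
  have "pedges w l 0 = {}" by (simp add: pedges_def)
  then show ?case by simp
next
  case (Suc k)
  then have k: "l + k < r" by simp
  define u where "u = take (l + k) w"
  define u' where "u' = take (Suc (l + k)) w"
  define e0 where "e0 = (u, u')"
  define E where "E = E0 - pedges w l k"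
  have finE': "finite E" using finE by (simp add: E_def)
  have uB: "u \<in> B" "u \<in> V" using pathB k by (auto simp: u_def)
  have uu: "u' \<noteq> u" using take_inj[of "Suc (l+k)" w "l+k"] k rw by (auto simp: u_def u'_def)
  have uw: "u \<noteq> w" using take_inj[of "l+k" w "length w"] k rw by (auto simp: u_def)
  have e0E: "e0 \<in> E"
  proof -
    have "e0 \<in> E0" using PEsub k by (auto simp: e0_def u_def u'_def)
    moreover have "e0 \<notin> pedges w l k"
    proof
      assume "e0 \<in> pedges w l k"
      then obtain j where j: "l \<le> j" "j < l + k" "u = take j w" by (auto simp: pedges_def e0_def)
      then show False using take_inj[of j w "l+k"] k rw by (auto simp: u_def)
    qed
    ultimately show ?thesis by (simp add: E_def)
  qed
  have rest0: "fst e \<noteq> u \<and> snd e \<noteq> u" if e: "e \<in> E - {e0}" for e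
  proof (rule ccontr)
    assume "\<not> (fst e \<noteq> u \<and> snd e \<noteq> u)"
    then have "fst e = take (l+k) w \<or> snd e = take (l+k) w" by (auto simp: u_def)
    moreover have "e \<in> E0" using e by (simp add: E_def)
    moreover have "l \<le> l + k \<and> l + k < r" using k by simp
    ultimately have "\<exists>j'. l \<le> j' \<and> j' < r \<and> e = (take j' w, take (Suc j') w)"
      using touch by blast
    then obtain j' where j': "l \<le> j'" "j' < r" "e = (take j' w, take (Suc j') w)" by blast
    have "take j' w = take (l+k) w \<or> take (Suc j') w = take (l+k) w"
      using \<open>fst e = take (l+k) w \<or> snd e = take (l+k) w\<close> j' by auto
    then have "j' = l + k \<or> Suc j' = l + k" using take_inj[of j' w "l+k"] take_inj[of "Suc j'" w "l+k"] j' k rw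
      by auto
    then show False
    proof
      assume "j' = l + k" then show False using e j' by (auto simp: e0_def u_def u'_def)
    next
      assume "Suc j' = l + k"
      then have "e \<in> pedges w l k" using j' by (auto simp: pedges_def)
      then show False using e by (simp add: E_def)
    qed
  qed
  have ginv: "\<And>\<eta>. \<eta> \<in> cset V B \<sigma> \<Longrightarrow> (\<lambda>\<eta>. if \<eta> w = s then 1 else 0) (flip {u} \<eta>) = (\<lambda>\<eta>. if \<eta> w = s then (1::real) else 0) \<eta>"
    using uw by (simp add: flip_def)
  have Enext: "E0 - pedges w l (Suc k) = E - {e0}"
    by (auto simp: E_def pedges_Suc e0_def u_def u'_def)
  have c1: "(\<Sum>\<eta>\<in>cset V B \<sigma>. (if \<eta> w = s then 1 else 0) * PE \<theta> E \<eta>)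
      = (\<Sum>\<eta>\<in>cset V B \<sigma>. (if \<eta> w = s then 1 else 0) * PE \<theta> (E - {e0}) \<eta>)"
    by (rule cut_edge[OF fin finE', where D="{u}" and ed=e0 and g="\<lambda>\<eta>. if \<eta> w = s then 1 else 0"])
       (use uB e0E uu rest0 ginv in \<open>auto simp: e0_def\<close>)
  have c2: "(\<Sum>\<eta>\<in>cset V B \<sigma>. (if \<eta> w = s then 1 else 0) * \<eta> u * PE \<theta> E \<eta>)
      = \<theta> * (\<Sum>\<eta>\<in>cset V B \<sigma>. (if \<eta> w = s then 1 else 0) * \<eta> u' * PE \<theta> (E - {e0}) \<eta>)"
    by (rule move_edge[OF fin finE' uB e0E _ uu, where g="\<lambda>\<eta>. if \<eta> w = s then 1 else 0"])
       (use rest0 ginv in \<open>auto simp: e0_def\<close>)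
  show ?case
    using Suc.IH[OF Suc_leD[OF Suc.prems]] c1 c2
    unfolding Enext[symmetric] E_def[symmetric] u_def u'_def
    by (simp add: add.commute add.left_commute)
qed




lemma flip_app: "flip D \<eta> u = (if u \<in> D then - \<eta> u else \<eta> u)"
  by (simp add: flip_def)

lemma prefix_take_len: "prefix x w \<Longrightarrow> x = take (length x) w"
  unfolding prefix_def by auto

lemma prefix_len: "prefix x w \<Longrightarrow> length x \<le> length w"
  unfolding prefix_def by auto

lemma prefix_eq_len: "prefix x w \<Longrightarrow> prefix y w \<Longrightarrow> length x = length y \<Longrightarrow> x = y"
  by (metis prefix_take_len)

lemma take_prefix_take: "i \<le> j \<Longrightarrow> prefix (take i w) (take j w)"
  by (metis min.absorb1 take_is_prefix take_take)

lemma prefix_snoc_not: "prefix c (a @ [i]) \<Longrightarrow> \<not> prefix c a \<Longrightarrow> c = a @ [i]"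
  by simp

lemma tv_prefix: "u \<in> tree_vertices b h \<Longrightarrow> prefix x u \<Longrightarrow> x \<in> tree_vertices b h"
  unfolding tree_vertices_def using prefix_len set_mono_prefix by fastforce

lemma finite_tv: "finite (tree_vertices b h)"
proof -
  have "tree_vertices b h = {xs. set xs \<subseteq> {..<b} \<and> length xs \<le> h}" by (auto simp: tree_vertices_def)
  then show ?thesis by (simp add: finite_lists_length_le)
qed

lemma card_level: "l \<le> h \<Longrightarrow> card (level b h l) = b ^ l"
proof -
  assume "l \<le> h"
  then have "level b h l = {xs. set xs \<subseteq> {..<b} \<and> length xs = l}"
    by (auto simp: level_def tree_vertices_def)
  then show ?thesis by (simp add: card_lists_length_eq)
qed

lemma edgesE: "e \<in> edges V \<Longrightarrow> (\<And>a i. e = (a, a @ [i]) \<Longrightarrow> a \<in> V \<Longrightarrow> a @ [i] \<in> V \<Longrightarrow> P) \<Longrightarrow> P"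
  unfolding edges_def by blast

lemma edges_mem: "(a, a @ [i]) \<in> edges V \<longleftrightarrow> a \<in> V \<and> a @ [i] \<in> V"
  unfolding edges_def by blast

text \<open>subtree flips cross only through the parent edge\<close>
lemma subtree_cross:
  assumes "e \<in> edges V" "e' \<in> edges V" "snd e = c" "e' \<noteq> e"
  shows "prefix c (fst e') \<longleftrightarrow> prefix c (snd e')"
proof -
  obtain a i where e: "e = (a, a @ [i])" using assms(1) by (rule edgesE)
  obtain a' i' where e': "e' = (a', a' @ [i'])" using assms(2) by (rule edgesE)
  show ?thesis
  proof
    assume "prefix c (fst e')" then show "prefix c (snd e')" using e' by simp
  next
    assume h: "prefix c (snd e')"
    show "prefix c (fst e')"
    proof (rule ccontr)
      assume "\<not> prefix c (fst e')"
      then have "c = a' @ [i']" using h e' by simp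
      then have "a' @ [i'] = a @ [i]" using assms(3) e by simp
      then have "e' = e" using e e' by simp
      then show False using assms(4) by simp
    qed
  qed
qed

lemma subtree_cuts:
  assumes fin: "finite V" and finE: "finite E" and EV: "E \<subseteq> edges V" and FB: "FB \<subseteq> E"
    and sub: "\<forall>e\<in>FB. {x \<in> V. prefix (snd e) x} \<subseteq> B \<and> \<not> prefix (snd e) (fst e)"
    and ginv: "\<forall>e\<in>FB. \<forall>\<eta>\<in>cset V B \<sigma>. g (flip {x \<in> V. prefix (snd e) x} \<eta>) = g \<eta>"
  shows "(\<Sum>\<eta>\<in>cset V B \<sigma>. g \<eta> * PE \<theta> E \<eta>) = (\<Sum>\<eta>\<in>cset V B \<sigma>. g \<eta> * PE \<theta> (E - FB) \<eta>)"
proof -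
  have finFB: "finite FB" using finE FB finite_subset by blast
  have "finite F \<Longrightarrow> F \<subseteq> FB \<Longrightarrow> (\<Sum>\<eta>\<in>cset V B \<sigma>. g \<eta> * PE \<theta> E \<eta>) = (\<Sum>\<eta>\<in>cset V B \<sigma>. g \<eta> * PE \<theta> (E - F) \<eta>)" for F
  proof (induction F rule: finite_induct)
    case empty then show ?case by simp
  next
    case (insert e F)
    have eFB: "e \<in> FB" using insert.prems by auto
    have IH: "(\<Sum>\<eta>\<in>cset V B \<sigma>. g \<eta> * PE \<theta> E \<eta>) = (\<Sum>\<eta>\<in>cset V B \<sigma>. g \<eta> * PE \<theta> (E - F) \<eta>)"
      using insert.IH insert.prems by auto
    define D where "D = {x \<in> V. prefix (snd e) x}"
    have eE: "e \<in> E - F" using insert.hyps eFB FB by auto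
    have eV: "e \<in> edges V" using eE EV by auto
    have DB: "D \<subseteq> B" "D \<subseteq> V" using sub eFB by (auto simp: D_def)
    have sndV: "snd e \<in> V" "fst e \<in> V" using eV by (auto simp: edges_def)
    have cross: "(fst e \<in> D) \<noteq> (snd e \<in> D)" using sub eFB sndV by (auto simp: D_def)
    have rest: "\<forall>e'\<in>(E - F) - {e}. fst e' \<in> D \<longleftrightarrow> snd e' \<in> D"
    proof
      fix e' assume e': "e' \<in> (E - F) - {e}"
      then have e'V: "e' \<in> edges V" using EV by auto
      then have "fst e' \<in> V" "snd e' \<in> V" by (auto simp: edges_def)
      moreover have "prefix (snd e) (fst e') \<longleftrightarrow> prefix (snd e) (snd e')"
        using subtree_cross[OF eV e'V refl] e' by auto
      ultimately show "fst e' \<in> D \<longleftrightarrow> snd e' \<in> D" by (auto simp: D_def)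
    qed
    have "(\<Sum>\<eta>\<in>cset V B \<sigma>. g \<eta> * PE \<theta> (E - F) \<eta>) = (\<Sum>\<eta>\<in>cset V B \<sigma>. g \<eta> * PE \<theta> ((E - F) - {e}) \<eta>)"
      by (rule cut_edge[OF fin _ DB eE cross rest]) (use finE ginv eFB in \<open>auto simp: D_def\<close>)
    moreover have "(E - F) - {e} = E - insert e F" by auto
    ultimately show ?case using IH by simp
  qed
  then show ?thesis using finFB by simp
qed

lemma const_sum:
  assumes fin: "finite V" and \<sigma>: "\<sigma> \<in> confs V" and wB: "w \<in> B" and BV: "B \<subseteq> V" and finE: "finite E"
    and nt: "\<forall>e\<in>E. fst e \<notin> B - {w} \<and> snd e \<notin> B - {w}"
  shows "(\<Sum>\<eta>\<in>cset V B \<sigma>. (if \<eta> w = s then 1 else 0) * PE \<theta> E \<eta>)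
       = real (card {\<eta>\<in>cset V B \<sigma>. \<eta> w = s}) * PE \<theta> E (\<sigma>(w := s))"
proof -
  have eq: "PE \<theta> E \<eta> = PE \<theta> E (\<sigma>(w := s))" if "\<eta> \<in> cset V B \<sigma>" "\<eta> w = s" for \<eta>
    unfolding PE_def
  proof (rule prod.cong[OF refl])
    fix e assume e: "e \<in> E"
    have ag: "\<eta> u = (\<sigma>(w := s)) u" if "u \<notin> B - {w}" for u
    proof (cases "u = w")
      case True then show ?thesis using \<open>\<eta> w = s\<close> by simp
    next
      case False
      then have "u \<notin> B" using that by simp
      show ?thesis
      proof (cases "u \<in> V")
        case True then show ?thesis using \<open>\<eta> \<in> cset V B \<sigma>\<close> \<open>u \<notin> B\<close> False by (auto simp: cset_def)
      next
        case nV: False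
        then have "\<eta> u = 1" "\<sigma> u = 1" using \<open>\<eta> \<in> cset V B \<sigma>\<close> \<sigma> by (auto simp: cset_def confs_def)
        then show ?thesis using False by simp
      qed
    qed
    show "1 + \<theta> * \<eta> (fst e) * \<eta> (snd e) = 1 + \<theta> * (\<sigma>(w := s)) (fst e) * (\<sigma>(w := s)) (snd e)"
      using ag nt e by auto
  qed
  have "(\<Sum>\<eta>\<in>cset V B \<sigma>. (if \<eta> w = s then 1 else 0) * PE \<theta> E \<eta>)
      = (\<Sum>\<eta>\<in>{\<eta>\<in>cset V B \<sigma>. \<eta> w = s}. PE \<theta> E \<eta>)"
  proof -
    have "(\<Sum>\<eta>\<in>cset V B \<sigma>. (if \<eta> w = s then 1 else 0) * PE \<theta> E \<eta>)
        = (\<Sum>\<eta>\<in>cset V B \<sigma>. if \<eta> w = s then PE \<theta> E \<eta> else 0)" by (rule sum.cong) auto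
    also have "\<dots> = (\<Sum>\<eta>\<in>{\<eta>\<in>cset V B \<sigma>. \<eta> w = s}. PE \<theta> E \<eta>)"
      using finite_cset[OF fin] by (simp add: sum.inter_filter)
    finally show ?thesis .
  qed
  also have "\<dots> = (\<Sum>\<eta>\<in>{\<eta>\<in>cset V B \<sigma>. \<eta> w = s}. PE \<theta> E (\<sigma>(w := s)))"
    by (rule sum.cong) (auto simp: eq)
  finally show ?thesis by simp
qed

lemma count_pos:
  assumes fin: "finite V" and \<sigma>: "\<sigma> \<in> confs V" and wB: "w \<in> B" and wV: "w \<in> V" and s: "s = 1 \<or> s = -1"
  shows "card {\<eta>\<in>cset V B \<sigma>. \<eta> w = s} > 0"
proof -
  have "\<sigma>(w := s) \<in> {\<eta>\<in>cset V B \<sigma>. \<eta> w = s}"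
    using \<sigma> wB wV s by (auto simp: cset_def confs_def)
  moreover have "finite {\<eta>\<in>cset V B \<sigma>. \<eta> w = s}" using finite_cset[OF fin] by simp
  ultimately show ?thesis by (auto simp: card_gt_0_iff)
qed

lemma count_sym:
  assumes wB: "w \<in> B" and wV: "w \<in> V"
  shows "card {\<eta>\<in>cset V B \<sigma>. \<eta> w = 1} = card {\<eta>\<in>cset V B \<sigma>. \<eta> w = -1}"
proof (rule bij_betw_same_card[of "flip {w}"])
  have D: "{w} \<subseteq> B" "{w} \<subseteq> V" using wB wV by auto
  show "bij_betw (flip {w}) {\<eta>\<in>cset V B \<sigma>. \<eta> w = 1} {\<eta>\<in>cset V B \<sigma>. \<eta> w = -1}"
  proof (rule bij_betw_byWitness[where f' = "flip {w}"])
    show "\<forall>a\<in>{\<eta>\<in>cset V B \<sigma>. \<eta> w = 1}. flip {w} (flip {w} a) = a" by simp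
    show "\<forall>a\<in>{\<eta>\<in>cset V B \<sigma>. \<eta> w = -1}. flip {w} (flip {w} a) = a" by simp
    show "flip {w} ` {\<eta>\<in>cset V B \<sigma>. \<eta> w = 1} \<subseteq> {\<eta>\<in>cset V B \<sigma>. \<eta> w = -1}"
      using flip_cset[OF D] by (auto simp: flip_app)
    show "flip {w} ` {\<eta>\<in>cset V B \<sigma>. \<eta> w = -1} \<subseteq> {\<eta>\<in>cset V B \<sigma>. \<eta> w = 1}"
      using flip_cset[OF D] by (auto simp: flip_app)
  qed
qed





lemma tv_alg1:
  fixes h1 h2 e :: real
  assumes h1: "h1 > 0" and h2: "h2 > 0" and e: "\<bar>e\<bar> \<le> 1"
  shows "\<bar>(1 + e) * h1 / ((1 + e) * h1 + (1 - e) * h2) - h1 / (h1 + h2)\<bar> \<le> \<bar>e\<bar>"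
proof -
  define D1 where "D1 = (1 + e) * h1 + (1 - e) * h2"
  define D2 where "D2 = h1 + h2"
  have D2p: "D2 > 0" using h1 h2 by (simp add: D2_def)
  have key: "D1 * D2 - 2 * h1 * h2 = (1 + e) * h1 * h1 + (1 - e) * h2 * h2"
    by (simp add: D1_def D2_def algebra_simps)
  have ep: "1 + e \<ge> 0" "1 - e \<ge> 0" using e by auto
  have D1p: "D1 > 0"
  proof -
    have "D1 = (h1 + h2) + e * (h1 - h2)" by (simp add: D1_def algebra_simps)
    have "(1 + e) * h1 \<ge> 0" "(1 - e) * h2 \<ge> 0" using ep h1 h2 by auto
    moreover have "(1 + e) * h1 > 0 \<or> (1 - e) * h2 > 0"
    proof (cases "e \<ge> 0")
      case True then show ?thesis using h1 by simp
    next
      case False then show ?thesis using h2 by simp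
    qed
    ultimately show ?thesis by (auto simp: D1_def)
  qed
  have diff: "(1 + e) * h1 / D1 - h1 / D2 = e * (2 * h1 * h2 / (D1 * D2))"
    using D1p D2p by (simp add: D1_def D2_def field_simps)
  have le1: "2 * h1 * h2 / (D1 * D2) \<le> 1"
  proof -
    have "(1 + e) * h1 * h1 + (1 - e) * h2 * h2 \<ge> 0" using ep h1 h2 by (simp add: mult_nonneg_nonneg)
    then have "2 * h1 * h2 \<le> D1 * D2" using key by linarith
    then show ?thesis using D1p D2p by simp
  qed
  have nn: "2 * h1 * h2 / (D1 * D2) \<ge> 0" using h1 h2 D1p D2p by simp
  have "\<bar>e * (2 * h1 * h2 / (D1 * D2))\<bar> = \<bar>e\<bar> * (2 * h1 * h2 / (D1 * D2))" using nn by (metis abs_mult abs_of_nonneg)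
  also have "\<dots> \<le> \<bar>e\<bar> * 1" using le1 by (intro mult_left_mono) auto
  finally show ?thesis using diff by (simp add: D1_def D2_def)
qed

lemma tv_alg2:
  fixes h1 h2 e :: real
  assumes h1: "h1 > 0" and h2: "h2 > 0" and e: "\<bar>e\<bar> \<le> 1"
  shows "\<bar>(1 - e) * h2 / ((1 + e) * h1 + (1 - e) * h2) - h2 / (h1 + h2)\<bar> \<le> \<bar>e\<bar>"
proof -
  have "\<bar>(1 + (-e)) * h2 / ((1 + (-e)) * h2 + (1 - (-e)) * h1) - h2 / (h2 + h1)\<bar> \<le> \<bar>-e\<bar>"
    by (rule tv_alg1) (use h1 h2 e in auto)
  then show ?thesis by (simp add: add.commute)
qed

lemma PE_pos:
  assumes "\<forall>u. \<sigma> u = 1 \<or> \<sigma> u = -1" and "\<bar>\<theta>\<bar> < 1"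
  shows "PE \<theta> E \<sigma> > 0"
  unfolding PE_def
proof (rule prod_pos)
  fix e assume "e \<in> E"
  have "\<sigma> (fst e) * \<sigma> (snd e) = 1 \<or> \<sigma> (fst e) * \<sigma> (snd e) = -1" using assms(1)[rule_format, of "fst e"] assms(1)[rule_format, of "snd e"] by auto
  then show "0 < 1 + \<theta> * \<sigma> (fst e) * \<sigma> (snd e)" using assms(2) by (auto simp: mult.assoc)
qed

lemma split_w:
  assumes "finite E"
  shows "PE \<theta> E (\<sigma>(w := s)) = PE \<theta> {e\<in>E. fst e = w \<or> snd e = w} (\<sigma>(w := s)) * PE \<theta> {e\<in>E. \<not> (fst e = w \<or> snd e = w)} \<sigma>"
proof -
  have "PE \<theta> E (\<sigma>(w := s)) = PE \<theta> {e\<in>E. fst e = w \<or> snd e = w} (\<sigma>(w := s)) * PE \<theta> {e\<in>E. \<not> (fst e = w \<or> snd e = w)} (\<sigma>(w := s))"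
  proof -
    have "E = {e\<in>E. fst e = w \<or> snd e = w} \<union> {e\<in>E. \<not> (fst e = w \<or> snd e = w)}" by auto
    then show ?thesis unfolding PE_def using assms
      by (metis (no_types, lifting) prod.union_disjoint finite_Un disjoint_iff mem_Collect_eq)
  qed
  moreover have "PE \<theta> {e\<in>E. \<not> (fst e = w \<or> snd e = w)} (\<sigma>(w := s)) = PE \<theta> {e\<in>E. \<not> (fst e = w \<or> snd e = w)} \<sigma>"
    unfolding PE_def by (rule prod.cong) auto
  ultimately show ?thesis by simp
qed


lemma kernel_ratio:
  assumes fin: "finite V" and \<sigma>: "\<sigma> \<in> confs V"
    and Zd: "\<And>t. Z t = (\<Sum>\<eta>\<in>cset V B \<sigma>. (if \<eta> w = t then 1 else 0) * PE (tanh \<beta>) (edges V) \<eta>)"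
  shows "(\<Sum>\<eta>\<in>{\<eta>\<in>confs V. \<eta> w = s'}. block_kernel \<beta> V B \<sigma> \<eta>) = Z s' / (Z 1 + Z (-1))"
proof -
  let ?\<theta> = "tanh \<beta>"
  have num: "(\<Sum>\<eta>\<in>{\<eta>\<in>cset V B \<sigma>. \<eta> w = t}. PE ?\<theta> (edges V) \<eta>) = Z t" for t
  proof -
    have "(\<Sum>\<eta>\<in>cset V B \<sigma>. (if \<eta> w = t then 1 else 0) * PE ?\<theta> (edges V) \<eta>)
        = (\<Sum>\<eta>\<in>cset V B \<sigma>. if \<eta> w = t then PE ?\<theta> (edges V) \<eta> else 0)" by (rule sum.cong) auto
    also have "\<dots> = (\<Sum>\<eta>\<in>{\<eta>\<in>cset V B \<sigma>. \<eta> w = t}. PE ?\<theta> (edges V) \<eta>)"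
      using finite_cset[OF fin] by (simp add: sum.inter_filter)
    finally show ?thesis using Zd by simp
  qed
  have den: "(\<Sum>\<eta>\<in>cset V B \<sigma>. PE ?\<theta> (edges V) \<eta>) = Z 1 + Z (-1)"
  proof -
    have "(\<Sum>\<eta>\<in>cset V B \<sigma>. PE ?\<theta> (edges V) \<eta>)
        = (\<Sum>\<eta>\<in>cset V B \<sigma>. (if \<eta> w = 1 then 1 else 0) * PE ?\<theta> (edges V) \<eta> + (if \<eta> w = -1 then 1 else 0) * PE ?\<theta> (edges V) \<eta>)"
    proof (rule sum.cong[OF refl])
      fix \<eta> assume "\<eta> \<in> cset V B \<sigma>"
      then have "\<eta> w = 1 \<or> \<eta> w = -1" using cset_sub confs_val by blast
      then show "PE ?\<theta> (edges V) \<eta> = (if \<eta> w = 1 then 1 else 0) * PE ?\<theta> (edges V) \<eta> + (if \<eta> w = -1 then 1 else 0) * PE ?\<theta> (edges V) \<eta>"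
        by auto
    qed
    then show ?thesis using Zd by (simp add: sum.distrib)
  qed
  show ?thesis using kernel_marg[OF fin \<sigma>, where w=w and s=s' and \<beta>=\<beta> and B=B] num den by simp
qed

lemma single_ratio:
  assumes fin: "finite V" and \<sigma>: "\<sigma> \<in> confs V" and u: "u \<in> V" and \<beta>: "\<beta> > 0" and t: "t = 1 \<or> t = -1"
  shows "(\<Sum>\<eta>\<in>{\<eta>\<in>confs V. \<eta> u = t}. block_kernel \<beta> V {u} \<sigma> \<eta>)
     = PE (tanh \<beta>) {e\<in>edges V. fst e = u \<or> snd e = u} (\<sigma>(u := t))
       / (PE (tanh \<beta>) {e\<in>edges V. fst e = u \<or> snd e = u} (\<sigma>(u := 1)) + PE (tanh \<beta>) {e\<in>edges V. fst e = u \<or> snd e = u} (\<sigma>(u := -1)))"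
proof -
  let ?\<theta> = "tanh \<beta>"
  let ?Eu = "{e\<in>edges V. fst e = u \<or> snd e = u}"
  define Z where "Z = (\<lambda>t. \<Sum>\<eta>\<in>cset V {u} \<sigma>. (if \<eta> u = t then 1 else 0) * PE ?\<theta> (edges V) \<eta>)"
  define N where "N = real (card {\<eta>\<in>cset V {u} \<sigma>. \<eta> u = 1})"
  define c where "c = PE ?\<theta> {e\<in>edges V. \<not> (fst e = u \<or> snd e = u)} \<sigma>"
  have \<theta>a: "\<bar>?\<theta>\<bar> < 1" using \<beta> tanh_real_lt_1[of \<beta>] by simp
  have finE: "finite (edges V)" using finite_edges[OF fin] .
  have N': "real (card {\<eta>\<in>cset V {u} \<sigma>. \<eta> u = -1}) = N" using count_sym[of u "{u}" V] u by (simp add: N_def)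
  have Np: "N > 0" using count_pos[OF fin \<sigma> _ u, of "{u}" 1] by (simp add: N_def)
  have cp: "c > 0" unfolding c_def by (rule PE_pos[OF _ \<theta>a]) (use confs_val[OF \<sigma>] in blast)
  have Zf: "Z t' = N * (PE ?\<theta> ?Eu (\<sigma>(u := t')) * c)" if t': "t' = 1 \<or> t' = -1" for t'
  proof -
    have "Z t' = real (card {\<eta>\<in>cset V {u} \<sigma>. \<eta> u = t'}) * PE ?\<theta> (edges V) (\<sigma>(u := t'))"
      unfolding Z_def by (rule const_sum[OF fin \<sigma>]) (use u finE in auto)
    moreover have "real (card {\<eta>\<in>cset V {u} \<sigma>. \<eta> u = t'}) = N" using t' N' by (auto simp: N_def)
    ultimately show ?thesis using split_w[OF finE, of ?\<theta> \<sigma> u t'] by (simp add: c_def)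
  qed
  have "(\<Sum>\<eta>\<in>{\<eta>\<in>confs V. \<eta> u = t}. block_kernel \<beta> V {u} \<sigma> \<eta>) = Z t / (Z 1 + Z (-1))"
    by (rule kernel_ratio[OF fin \<sigma>]) (simp add: Z_def)
  moreover have "Z t / (Z 1 + Z (-1)) = PE ?\<theta> ?Eu (\<sigma>(u := t)) / (PE ?\<theta> ?Eu (\<sigma>(u := 1)) + PE ?\<theta> ?Eu (\<sigma>(u := -1)))"
  proof -
    have "Z t / (Z 1 + Z (-1)) = (N * c) * PE ?\<theta> ?Eu (\<sigma>(u := t)) / ((N * c) * (PE ?\<theta> ?Eu (\<sigma>(u := 1)) + PE ?\<theta> ?Eu (\<sigma>(u := -1))))"
      using Zf[OF t] Zf[of 1] Zf[of "-1"] by (simp add: algebra_simps)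
    then show ?thesis using Np cp by simp
  qed
  ultimately show ?thesis by simp
qed

locale vctx =
  fixes b h l r :: nat and wf :: "nat list \<Rightarrow> nat list" and v :: "nat list"
  assumes wfa: "\<forall>v\<in>level b h l. wf v \<in> level b h r \<and> prefix v (wf v)"
    and vL: "v \<in> level b h l" and l1: "1 \<le> l" and lr: "l < r" and rh: "r \<le> h"
begin

abbreviation "w \<equiv> wf v"
abbreviation "T \<equiv> tree_vertices b h"
abbreviation "Bv \<equiv> block_B b h v w"
abbreviation "Pth \<equiv> path_L v w"
abbreviation "pv \<equiv> take (l - 1) w"
definition "BE = {e\<in>edges T. snd e \<in> Bv \<and> snd e \<notin> Pth}"
abbreviation "E2X \<equiv> edges T - {(pv, v)} - BE"
abbreviation "E3X \<equiv> E2X - pedges w l (r - l)"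

lemma wL: "w \<in> level b h r" and pvw: "prefix v w" using wfa vL by auto
lemma lenv: "length v = l" using vL by (simp add: level_def)
lemma lenw: "length w = r" using wL by (simp add: level_def)
lemma wT: "w \<in> T" using wL by (simp add: level_def)
lemma vT: "v \<in> T" using vL by (simp add: level_def)
lemma vtake: "v = take l w" using prefix_take_len[OF pvw] lenv by simp
lemma takeT: "take j w \<in> T" using tv_prefix[OF wT take_is_prefix] .

lemma Pth_iff: "x \<in> Pth \<longleftrightarrow> (\<exists>j. l \<le> j \<and> j \<le> r \<and> x = take j w)"
proof
  assume "x \<in> Pth"
  then have a: "prefix v x" "prefix x w" by (auto simp: path_L_def)
  then have "x = take (length x) w" "l \<le> length x" "length x \<le> r"
    using prefix_take_len prefix_len lenv lenw by auto
  then show "\<exists>j. l \<le> j \<and> j \<le> r \<and> x = take j w" by blast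
next
  assume "\<exists>j. l \<le> j \<and> j \<le> r \<and> x = take j w"
  then obtain j where j: "l \<le> j" "x = take j w" by blast
  then show "x \<in> Pth" unfolding path_L_def using take_prefix_take[OF j(1), of w] vtake take_is_prefix
    by auto
qed

lemma Bv_iff: "x \<in> Bv \<longleftrightarrow> x \<in> T \<and> prefix v x \<and> (\<not> prefix w x \<or> x = w)"
  unfolding block_B_def subtree_def using wT pvw by auto

lemma Bv_T: "Bv \<subseteq> T" using Bv_iff by auto

lemma take_Bv: "l \<le> j \<Longrightarrow> j \<le> r \<Longrightarrow> take j w \<in> Bv"
proof -
  assume j: "l \<le> j" "j \<le> r"
  have "prefix v (take j w)" using take_prefix_take[OF j(1), of w] vtake by simp
  moreover have "\<not> prefix w (take j w) \<or> take j w = w"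
  proof (cases "j = r")
    case True then show ?thesis using lenw by simp
  next
    case False
    then have "length (take j w) < length w" using j lenw by simp
    then show ?thesis using prefix_len by fastforce
  qed
  ultimately show ?thesis using Bv_iff takeT by blast
qed

lemma Pth_Bv: "Pth \<subseteq> Bv" using Pth_iff take_Bv by auto

lemma wBv: "w \<in> Bv" using take_Bv[of r] lr lenw by simp

lemma pv_notB: "pv \<notin> Bv"
proof
  assume "pv \<in> Bv"
  then have "prefix v pv" using Bv_iff by blast
  then have "length v \<le> length pv" by (rule prefix_len)
  then show False using lenv lenw lr l1 by simp
qed

lemma pv_edge: "(pv, v) \<in> edges T"
proof -
  have s: "Suc (l - 1) = l" using l1 by simp
  have "l - 1 < length w" using lenw lr by simp
  then have "take (Suc (l - 1)) w = pv @ [w ! (l - 1)]" by (rule take_Suc_conv_app_nth)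
  then have "v = pv @ [w ! (l - 1)]" using vtake s by simp
  then show ?thesis using vT takeT[of "l - 1"] edges_mem[of pv "w ! (l - 1)" T] by simp
qed

lemma path_edge: "l \<le> j \<Longrightarrow> j < r \<Longrightarrow> (take j w, take (Suc j) w) \<in> edges T"
proof -
  assume "l \<le> j" "j < r"
  then have eq: "take (Suc j) w = take j w @ [w ! j]" using lenw by (simp add: take_Suc_conv_app_nth)
  have "(take j w, take j w @ [w ! j]) \<in> edges T"
    using edges_mem[of "take j w" "w ! j" T] takeT[of j] takeT[of "Suc j"] eq by simp
  then show ?thesis using eq by simp
qed

lemma pedges_iff: "e \<in> pedges w l (r - l) \<longleftrightarrow> (\<exists>j. l \<le> j \<and> j < r \<and> e = (take j w, take (Suc j) w))"
  unfolding pedges_def using lr by auto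

lemma classX:
  assumes e: "e \<in> edges T" and t: "fst e \<in> Bv - {w} \<or> snd e \<in> Bv - {w}"
  shows "e = (pv, v) \<or> e \<in> BE \<or> e \<in> pedges w l (r - l)"
proof -
  obtain a i where ea: "e = (a, a @ [i])" and aT: "a \<in> T" and ciT: "a @ [i] \<in> T" using e by (rule edgesE)
  have sndcase: "e = (pv, v) \<or> e \<in> BE \<or> e \<in> pedges w l (r - l)" if c: "a @ [i] \<in> Bv - {w}"
  proof (cases "a @ [i] \<in> Pth")
    case True
    then obtain j where j: "l \<le> j" "j \<le> r" "a @ [i] = take j w" using Pth_iff by blast
    have jr: "j \<noteq> r" using c j lenw by auto
    have a: "a = take (j - 1) w" using j(3) butlast_take[of j w] j lenw by (metis butlast_snoc)
    show ?thesis
    proof (cases "j = l")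
      case True
      then have "e = (pv, v)" using ea a j vtake by simp
      then show ?thesis by simp
    next
      case False
      then have "l \<le> j - 1" "j - 1 < r" "Suc (j - 1) = j" using j jr by auto
      then have "e \<in> pedges w l (r - l)" unfolding pedges_iff using ea a j(3) by metis
      then show ?thesis by simp
    qed
  next
    case False
    then have "e \<in> BE" using c e ea by (simp add: BE_def)
    then show ?thesis by simp
  qed
  show ?thesis
  proof (cases "a @ [i] \<in> Bv - {w}")
    case True then show ?thesis by (rule sndcase)
  next
    case False
    then have aB: "a \<in> Bv - {w}" using t ea by auto
    then have va: "prefix v a" and nwa: "\<not> prefix w a" using Bv_iff by auto
    have "prefix v (a @ [i])" using va by simp
    then have "prefix w (a @ [i])" using False Bv_iff ciT by auto
    then have ciw: "a @ [i] = w" using nwa by simp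
    then have "a = take (r - 1) w" using butlast_take[of r w] lenw by (metis butlast_snoc take_all order_refl)
    moreover have "w = take (Suc (r - 1)) w" using lenw lr by simp
    ultimately have "l \<le> r - 1 \<and> r - 1 < r \<and> e = (take (r - 1) w, take (Suc (r - 1)) w)"
      using ea ciw lr by auto
    then have "e \<in> pedges w l (r - l)" unfolding pedges_iff by blast
    then show ?thesis by simp
  qed
qed

lemma BE_props:
  assumes e: "e \<in> BE"
  shows "{x \<in> T. prefix (snd e) x} \<subseteq> Bv" and "\<not> prefix (snd e) (fst e)"
    and "w \<notin> {x \<in> T. prefix (snd e) x}" and "v \<notin> {x \<in> T. prefix (snd e) x}"
proof -
  have eT: "e \<in> edges T" and cB: "snd e \<in> Bv" and cP: "snd e \<notin> Pth" using e by (auto simp: BE_def)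
  obtain a i where ea: "e = (a, a @ [i])" using eT by (rule edgesE)
  have vc: "prefix v (snd e)" using cB Bv_iff by blast
  have ncw: "\<not> prefix (snd e) w" using cP vc by (simp add: path_L_def)
  have nwc: "\<not> prefix w (snd e)"
  proof
    assume "prefix w (snd e)"
    then have "snd e = w" using cB Bv_iff by blast
    then show False using ncw by simp
  qed
  show "{x \<in> T. prefix (snd e) x} \<subseteq> Bv"
  proof
    fix x assume x: "x \<in> {x \<in> T. prefix (snd e) x}"
    then have xT: "x \<in> T" and cx: "prefix (snd e) x" by auto
    have "prefix v x" using vc cx by (rule prefix_order.trans)
    moreover have "\<not> prefix w x"
    proof
      assume "prefix w x"
      then have "prefix w (snd e) \<or> prefix (snd e) w" using cx prefix_same_cases by blast
      then show False using ncw nwc by blast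
    qed
    ultimately show "x \<in> Bv" using xT Bv_iff by blast
  qed
  show "\<not> prefix (snd e) (fst e)" using ea prefix_len by fastforce
  show "w \<notin> {x \<in> T. prefix (snd e) x}" using ncw by simp
  show "v \<notin> {x \<in> T. prefix (snd e) x}"
  proof
    assume "v \<in> {x \<in> T. prefix (snd e) x}"
    then have "snd e = v" using vc by (auto intro: prefix_order.antisym)
    then show False using cP Pth_iff vtake lr by auto
  qed
qed

lemma BE_sub: "BE \<subseteq> edges T - {(pv, v)}"
proof -
  have "v \<in> Pth" using Pth_iff vtake lr by auto
  then show ?thesis by (auto simp: BE_def)
qed

lemma touchX: "\<forall>j. l \<le> j \<and> j < r \<longrightarrow> (\<forall>e\<in>E2X. (fst e = take j w \<or> snd e = take j w) \<longrightarrow>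
                  (\<exists>j'. l \<le> j' \<and> j' < r \<and> e = (take j' w, take (Suc j') w)))"
proof (intro allI impI ballI)
  fix j e assume j: "l \<le> j \<and> j < r" and e: "e \<in> E2X" and t: "fst e = take j w \<or> snd e = take j w"
  have tB: "take j w \<in> Bv" using take_Bv j by auto
  have tw: "take j w \<noteq> w" using j lenw by (metis length_take min.absorb4 nat_neq_iff)
  have tBw: "take j w \<in> Bv - {w}" using tB tw by simp
  have "fst e \<in> Bv - {w} \<or> snd e \<in> Bv - {w}"
  proof (cases "fst e = take j w")
    case True then show ?thesis using tBw by simp
  next
    case False then have "snd e = take j w" using t by simp
    then show ?thesis using tBw by simp
  qed
  then have "e = (pv, v) \<or> e \<in> BE \<or> e \<in> pedges w l (r - l)" using classX e by blast
  then show "\<exists>j'. l \<le> j' \<and> j' < r \<and> e = (take j' w, take (Suc j') w)" using e pedges_iff by blast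
qed

lemma PEsubX: "\<forall>j. l \<le> j \<and> j < r \<longrightarrow> (take j w, take (Suc j) w) \<in> E2X"
proof (intro allI impI)
  fix j assume j: "l \<le> j \<and> j < r"
  have "(take j w, take (Suc j) w) \<in> edges T" using path_edge j by auto
  moreover have "take j w \<noteq> pv" using j lenw lr by (metis diff_le_self le_less_trans length_take min.absorb4 not_less order.strict_trans1 l1 diff_less zero_less_one)
  moreover have "take (Suc j) w \<in> Pth"
  proof -
    have "l \<le> Suc j \<and> Suc j \<le> r" using j by auto
    then show ?thesis using Pth_iff by blast
  qed
  ultimately show "(take j w, take (Suc j) w) \<in> E2X" by (auto simp: BE_def)
qed

lemma ntX: "\<forall>e\<in>E3X. fst e \<notin> Bv - {w} \<and> snd e \<notin> Bv - {w}"
  using classX by blast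


lemma ZX:
  assumes x: "x \<in> confs T" and s: "s = 1 \<or> s = -1"
  shows "(\<Sum>\<eta>\<in>cset T Bv x. (if \<eta> w = s then 1 else 0) * PE \<theta> (edges T) \<eta>)
     = (1 + \<theta> ^ (r - l + 1) * x pv * s) * (real (card {\<eta>\<in>cset T Bv x. \<eta> w = s}) * PE \<theta> E3X (x(w := s)))"
proof -
  let ?g = "\<lambda>\<eta>::nat list \<Rightarrow> real. if \<eta> w = s then 1 else (0::real)"
  let ?E1 = "edges T - {(pv, v)}"
  have finT: "finite T" by (rule finite_tv)
  have finE: "finite (edges T)" using finite_edges[OF finT] .
  have finE1: "finite ?E1" using finE by simp
  have pvT: "pv \<in> T" using takeT .
  have s1: "(\<Sum>\<eta>\<in>cset T Bv x. ?g \<eta> * PE \<theta> (edges T) \<eta>)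
     = (\<Sum>\<eta>\<in>cset T Bv x. ?g \<eta> * PE \<theta> ?E1 \<eta>) + \<theta> * x pv * (\<Sum>\<eta>\<in>cset T Bv x. (?g \<eta> * \<eta> v) * PE \<theta> ?E1 \<eta>)"
  proof -
    have "(\<Sum>\<eta>\<in>cset T Bv x. ?g \<eta> * PE \<theta> (edges T) \<eta>)
        = (\<Sum>\<eta>\<in>cset T Bv x. ?g \<eta> * PE \<theta> ?E1 \<eta> + \<theta> * x pv * ((?g \<eta> * \<eta> v) * PE \<theta> ?E1 \<eta>))"
    proof (rule sum.cong[OF refl])
      fix \<eta> assume \<eta>: "\<eta> \<in> cset T Bv x"
      have "\<eta> pv = x pv" using \<eta> pvT pv_notB by (auto simp: cset_def)
      then show "?g \<eta> * PE \<theta> (edges T) \<eta> = ?g \<eta> * PE \<theta> ?E1 \<eta> + \<theta> * x pv * ((?g \<eta> * \<eta> v) * PE \<theta> ?E1 \<eta>)"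
        using PE_remove[OF finE pv_edge, of \<theta> \<eta>] by (simp add: algebra_simps)
    qed
    then show ?thesis by (simp add: sum.distrib sum_distrib_left)
  qed
  have BEsub: "BE \<subseteq> ?E1" using BE_sub .
  have BEprops: "\<forall>e\<in>BE. {y \<in> T. prefix (snd e) y} \<subseteq> Bv \<and> \<not> prefix (snd e) (fst e)"
    using BE_props by blast
  have s2a: "(\<Sum>\<eta>\<in>cset T Bv x. ?g \<eta> * PE \<theta> ?E1 \<eta>) = (\<Sum>\<eta>\<in>cset T Bv x. ?g \<eta> * PE \<theta> E2X \<eta>)"
  proof -
    have "(\<Sum>\<eta>\<in>cset T Bv x. ?g \<eta> * PE \<theta> ?E1 \<eta>) = (\<Sum>\<eta>\<in>cset T Bv x. ?g \<eta> * PE \<theta> (?E1 - BE) \<eta>)"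
      by (rule subtree_cuts[OF finT finE1 _ BEsub BEprops]) (use BE_props(3) in \<open>auto simp: flip_app\<close>)
    then show ?thesis by (simp add: set_diff_eq)
  qed
  have s2b: "(\<Sum>\<eta>\<in>cset T Bv x. (?g \<eta> * \<eta> v) * PE \<theta> ?E1 \<eta>) = (\<Sum>\<eta>\<in>cset T Bv x. (?g \<eta> * \<eta> v) * PE \<theta> E2X \<eta>)"
  proof -
    have "(\<Sum>\<eta>\<in>cset T Bv x. (?g \<eta> * \<eta> v) * PE \<theta> ?E1 \<eta>) = (\<Sum>\<eta>\<in>cset T Bv x. (?g \<eta> * \<eta> v) * PE \<theta> (?E1 - BE) \<eta>)"
      by (rule subtree_cuts[OF finT finE1 _ BEsub BEprops]) (use BE_props(3,4) in \<open>auto simp: flip_app\<close>)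
    then show ?thesis by (simp add: set_diff_eq)
  qed
  have finE2: "finite E2X" using finE by simp
  have pathB: "\<forall>j. l \<le> j \<and> j < r \<longrightarrow> take j w \<in> Bv \<and> take j w \<in> T" using take_Bv takeT by auto
  have pc: "(\<Sum>\<eta>\<in>cset T Bv x. ?g \<eta> * PE \<theta> E2X \<eta>) = (\<Sum>\<eta>\<in>cset T Bv x. ?g \<eta> * PE \<theta> (E2X - pedges w l (r - l)) \<eta>)
    \<and> (\<Sum>\<eta>\<in>cset T Bv x. ?g \<eta> * \<eta> (take l w) * PE \<theta> E2X \<eta>)
       = \<theta> ^ (r - l) * (\<Sum>\<eta>\<in>cset T Bv x. ?g \<eta> * \<eta> (take (l + (r - l)) w) * PE \<theta> (E2X - pedges w l (r - l)) \<eta>)"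
    by (rule path_cut[OF finT finE2 _ _ pathB PEsubX touchX]) (use lr lenw in auto)
  have tw: "take (l + (r - l)) w = w" using lr lenw by simp
  have wterm: "(\<Sum>\<eta>\<in>cset T Bv x. ?g \<eta> * \<eta> w * PE \<theta> E3X \<eta>) = s * (\<Sum>\<eta>\<in>cset T Bv x. ?g \<eta> * PE \<theta> E3X \<eta>)"
    unfolding sum_distrib_left by (rule sum.cong) auto
  have cs: "(\<Sum>\<eta>\<in>cset T Bv x. ?g \<eta> * PE \<theta> E3X \<eta>) = real (card {\<eta>\<in>cset T Bv x. \<eta> w = s}) * PE \<theta> E3X (x(w := s))"
    by (rule const_sum[OF finT x wBv Bv_T]) (use finE ntX in auto)
  show ?thesis
    using s1 s2a s2b pc wterm cs unfolding tw vtake[symmetric]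
    by (simp add: algebra_simps)
qed


abbreviation "F \<equiv> forest_F b h l wf"
abbreviation "E3Y \<equiv> edges F - pedges w l (r - l)"
abbreviation "Wc \<equiv> {e \<in> edges T. fst e = w}"

lemma F_iff: "x \<in> F \<longleftrightarrow> (\<exists>v'\<in>level b h l. x \<in> path_L v' (wf v') \<or> x \<in> subtree b h (wf v'))"
  by (simp add: forest_F_def)

lemma F_T: "F \<subseteq> T"
proof
  fix x assume "x \<in> F"
  then obtain v' where v': "v' \<in> level b h l" and x: "x \<in> path_L v' (wf v') \<or> x \<in> subtree b h (wf v')"
    using F_iff by blast
  have "wf v' \<in> T" using wfa v' by (auto simp: level_def)
  then show "x \<in> T" using x tv_prefix by (auto simp: path_L_def subtree_def)
qed

lemma F_pre: "x \<in> F \<Longrightarrow> \<exists>v'\<in>level b h l. prefix v' x \<and> (prefix x (wf v') \<or> prefix (wf v') x)"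
proof -
  assume "x \<in> F"
  then obtain v' where v': "v' \<in> level b h l" and x: "x \<in> path_L v' (wf v') \<or> x \<in> subtree b h (wf v')"
    using F_iff by blast
  have "prefix v' (wf v')" using wfa v' by auto
  then show ?thesis using v' x by (auto simp: path_L_def subtree_def intro: prefix_order.trans)
qed

lemma F_len: "x \<in> F \<Longrightarrow> l \<le> length x"
  using F_pre prefix_len by (fastforce simp: level_def)

lemma F_char: "x \<in> F \<Longrightarrow> prefix v x \<Longrightarrow> x \<in> Pth \<or> prefix w x"
proof -
  assume xF: "x \<in> F" and vx: "prefix v x"
  obtain v' where v': "v' \<in> level b h l" "prefix v' x" and c: "prefix x (wf v') \<or> prefix (wf v') x"
    using F_pre[OF xF] by blast
  have "v' = v" using prefix_eq_len[OF v'(2) vx] v'(1) lenv by (simp add: level_def)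
  then show ?thesis using c vx by (auto simp: path_L_def)
qed

lemma Pth_F: "Pth \<subseteq> F" using vL by (auto simp: forest_F_def)
lemma subw_F: "subtree b h w \<subseteq> F" using vL by (auto simp: forest_F_def)

lemma pv_notF: "pv \<notin> F"
proof
  assume "pv \<in> F"
  then have "l \<le> length pv" by (rule F_len)
  then show False using lenw lr l1 by simp
qed

lemma take_Pth: "l \<le> j \<Longrightarrow> j \<le> r \<Longrightarrow> take j w \<in> Pth"
  using Pth_iff by blast

lemma take_len: "j \<le> r \<Longrightarrow> length (take j w) = j" using lenw by simp

lemma touchY: "\<forall>j. l \<le> j \<and> j < r \<longrightarrow> (\<forall>e\<in>edges F. (fst e = take j w \<or> snd e = take j w) \<longrightarrow>
                  (\<exists>j'. l \<le> j' \<and> j' < r \<and> e = (take j' w, take (Suc j') w)))"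
proof (intro allI impI ballI)
  fix j e assume j: "l \<le> j \<and> j < r" and e: "e \<in> edges F" and t: "fst e = take j w \<or> snd e = take j w"
  obtain a i where ea: "e = (a, a @ [i])" and aF: "a \<in> F" and cF: "a @ [i] \<in> F" using e by (rule edgesE)
  show "\<exists>j'. l \<le> j' \<and> j' < r \<and> e = (take j' w, take (Suc j') w)"
  proof (cases "snd e = take j w")
    case True
    then have c: "a @ [i] = take j w" using ea by simp
    have "j \<noteq> l"
    proof
      assume "j = l"
      then have "a = pv" using c butlast_take[of l w] lenw lr by (metis butlast_snoc less_imp_le)
      then show False using aF pv_notF by simp
    qed
    then have j': "l \<le> j - 1" "j - 1 < r" "Suc (j - 1) = j" using j by auto
    have "a = take (j - 1) w" using c butlast_take[of j w] j lenw by (metis butlast_snoc less_imp_le)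
    then show ?thesis using j' ea c by metis
  next
    case False
    then have a: "a = take j w" using t ea by simp
    have va: "prefix v (a @ [i])" using a take_prefix_take[of l j w] j vtake by simp
    have "a @ [i] \<in> Pth \<or> prefix w (a @ [i])" using F_char[OF cF va] .
    then have pw: "prefix (a @ [i]) w"
    proof
      assume "a @ [i] \<in> Pth" then show ?thesis by (simp add: path_L_def)
    next
      assume h: "prefix w (a @ [i])"
      have "\<not> prefix w a" using a j lenw prefix_len by fastforce
      then show ?thesis using h by simp
    qed
    have "a @ [i] = take (Suc j) w" using prefix_take_len[OF pw] a j lenw by simp
    then show ?thesis using j ea a by blast
  qed
qed

lemma PEsubY: "\<forall>j. l \<le> j \<and> j < r \<longrightarrow> (take j w, take (Suc j) w) \<in> edges F"
proof (intro allI impI)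
  fix j assume j: "l \<le> j \<and> j < r"
  have eq: "take (Suc j) w = take j w @ [w ! j]" using j lenw by (simp add: take_Suc_conv_app_nth)
  have "take j w \<in> Pth" "take (Suc j) w \<in> Pth" using take_Pth j by auto
  then have "take j w \<in> F" "take j w @ [w ! j] \<in> F" using Pth_F eq by auto
  then show "(take j w, take (Suc j) w) \<in> edges F" using eq edges_mem by simp
qed

lemma ntY: "\<forall>e\<in>E3Y. fst e \<notin> Pth - {w} \<and> snd e \<notin> Pth - {w}"
proof (intro ballI)
  fix e assume e: "e \<in> E3Y"
  have "fst e \<noteq> take j w \<and> snd e \<noteq> take j w" if j: "l \<le> j" "j < r" for j
    using touchY j e pedges_iff by blast
  moreover have "x \<in> Pth - {w} \<Longrightarrow> \<exists>j. l \<le> j \<and> j < r \<and> x = take j w" for x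
    using Pth_iff lenw by (metis DiffE insertI1 le_neq_implies_less take_all order_refl)
  ultimately show "fst e \<notin> Pth - {w} \<and> snd e \<notin> Pth - {w}" by blast
qed

lemma ZY:
  assumes y: "y \<in> confs F" and s: "s = 1 \<or> s = -1"
  shows "(\<Sum>\<eta>\<in>cset F Pth y. (if \<eta> w = s then 1 else 0) * PE \<theta> (edges F) \<eta>)
     = real (card {\<eta>\<in>cset F Pth y. \<eta> w = s}) * PE \<theta> E3Y (y(w := s))"
proof -
  have finF: "finite F" using F_T finite_tv finite_subset by blast
  have finE: "finite (edges F)" using finite_edges[OF finF] .
  have pathB: "\<forall>j. l \<le> j \<and> j < r \<longrightarrow> take j w \<in> Pth \<and> take j w \<in> F"
    using take_Pth Pth_F by auto
  have pc: "(\<Sum>\<eta>\<in>cset F Pth y. (if \<eta> w = s then 1 else 0) * PE \<theta> (edges F) \<eta>)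
     = (\<Sum>\<eta>\<in>cset F Pth y. (if \<eta> w = s then 1 else 0) * PE \<theta> (edges F - pedges w l (r - l)) \<eta>)"
  proof -
    have lr': "l \<le> r" using lr by simp
    have rw': "r = length w" using lenw by simp
    show ?thesis
      using path_cut[OF finF finE lr' rw' pathB PEsubY touchY, where k="r - l" and \<sigma>=y and s=s and \<theta>=\<theta>]
      by (simp only: order_refl simp_thms)
  qed
  have wP: "w \<in> Pth" using take_Pth[of r] lr lenw by simp
  have cs: "(\<Sum>\<eta>\<in>cset F Pth y. (if \<eta> w = s then 1 else 0) * PE \<theta> E3Y \<eta>)
     = real (card {\<eta>\<in>cset F Pth y. \<eta> w = s}) * PE \<theta> E3Y (y(w := s))"
    by (rule const_sum[OF finF y wP Pth_F]) (use finE ntY in auto)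
  show ?thesis using pc cs by simp
qed


lemma snd_w_pedge: "e \<in> edges V \<Longrightarrow> snd e = w \<Longrightarrow> e \<in> pedges w l (r - l)"
proof -
  assume e: "e \<in> edges V" and sw: "snd e = w"
  obtain a i where ea: "e = (a, a @ [i])" using e by (rule edgesE)
  have "a = take (r - 1) w" using ea sw butlast_take[of r w] lenw by (metis butlast_snoc take_all order_refl snd_conv)
  moreover have "w = take (Suc (r - 1)) w" using lenw lr by simp
  ultimately have "l \<le> r - 1 \<and> r - 1 < r \<and> e = (take (r - 1) w, take (Suc (r - 1)) w)" using ea sw lr by auto
  then show ?thesis unfolding pedges_iff by blast
qed

lemma w_not_path_fst: "e \<in> pedges w l (r - l) \<Longrightarrow> fst e \<noteq> w"
  unfolding pedges_iff using lenw by (auto dest: take_inj[of _ w "length w"])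

lemma E3X_w: "{e\<in>E3X. fst e = w \<or> snd e = w} = Wc"
proof (intro set_eqI iffI)
  fix e assume "e \<in> {e\<in>E3X. fst e = w \<or> snd e = w}"
  then have e: "e \<in> E3X" and t: "fst e = w \<or> snd e = w" by auto
  have "snd e \<noteq> w" using snd_w_pedge e by blast
  then show "e \<in> Wc" using e t by auto
next
  fix e assume e: "e \<in> Wc"
  then have eT: "e \<in> edges T" and fw: "fst e = w" by auto
  obtain a i where ea: "e = (a, a @ [i])" using eT by (rule edgesE)
  have "e \<noteq> (pv, v)" using fw lenw lr l1 by (auto dest: arg_cong[of _ _ length])
  moreover have "e \<notin> BE"
  proof
    assume "e \<in> BE"
    then have "snd e \<in> Bv" by (simp add: BE_def)
    then show False using ea fw Bv_iff by auto
  qed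
  moreover have "e \<notin> pedges w l (r - l)" using w_not_path_fst fw by blast
  ultimately show "e \<in> {e\<in>E3X. fst e = w \<or> snd e = w}" using eT fw by auto
qed

lemma E3Y_w: "{e\<in>E3Y. fst e = w \<or> snd e = w} = Wc"
proof (intro set_eqI iffI)
  fix e assume "e \<in> {e\<in>E3Y. fst e = w \<or> snd e = w}"
  then have e: "e \<in> E3Y" and t: "fst e = w \<or> snd e = w" by auto
  have "snd e \<noteq> w" using snd_w_pedge e by blast
  then have "fst e = w" using t by simp
  moreover have "e \<in> edges T" using e F_T unfolding edges_def by blast
  ultimately show "e \<in> Wc" by auto
next
  fix e assume e: "e \<in> Wc"
  then have eT: "e \<in> edges T" and fw: "fst e = w" by auto
  obtain a i where ea: "e = (a, a @ [i])" and ciT: "a @ [i] \<in> T" using eT by (rule edgesE)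
  have "a @ [i] \<in> subtree b h w" using ea fw ciT by (simp add: subtree_def)
  moreover have "w \<in> subtree b h w" using wT by (simp add: subtree_def)
  ultimately have "e \<in> edges F" using subw_F ea fw edges_mem by auto
  moreover have "e \<notin> pedges w l (r - l)" using w_not_path_fst fw by blast
  ultimately show "e \<in> {e\<in>E3Y. fst e = w \<or> snd e = w}" using fw by auto
qed

lemma tv_local:
  assumes \<beta>: "\<beta> > 0" and x: "x \<in> confs T" and y: "y \<in> confs F"
    and agree: "\<forall>u\<in>subtree b h w. x u = y u" and s: "s = 1 \<or> s = -1"
  shows "\<bar>(\<Sum>\<eta>\<in>{\<eta>\<in>confs T. \<eta> w = s}. block_kernel \<beta> T Bv x \<eta>)
          - (\<Sum>\<eta>\<in>{\<eta>\<in>confs F. \<eta> w = s}. block_kernel \<beta> F Pth y \<eta>)\<bar> \<le> tanh \<beta> ^ (r - l)"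
proof -
  define \<theta> where "\<theta> = tanh \<beta>"
  have \<theta>0: "\<theta> \<ge> 0" "\<theta> < 1" using \<beta> tanh_real_lt_1 by (auto simp: \<theta>_def)
  have \<theta>a: "\<bar>\<theta>\<bar> < 1" using \<theta>0 by simp
  have finT: "finite T" by (rule finite_tv)
  have finF: "finite F" using F_T finite_tv finite_subset by blast
  have wTv: "w \<in> T" by (rule wT)
  have wF: "w \<in> F" using Pth_F take_Pth[of r] lr lenw by auto
  have wP: "w \<in> Pth" using take_Pth[of r] lr lenw by simp
  have red: "(\<Sum>\<eta>\<in>{\<eta>\<in>confs V. \<eta> w = s'}. block_kernel \<beta> V B \<sigma> \<eta>)
       = Z s' / (Z 1 + Z (-1))"
    if fin: "finite V" and \<sigma>: "\<sigma> \<in> confs V"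
      and Zd: "\<And>t. Z t = (\<Sum>\<eta>\<in>cset V B \<sigma>. (if \<eta> w = t then 1 else 0) * PE \<theta> (edges V) \<eta>)"
    for V B \<sigma> Z s'
  proof -
    have num: "(\<Sum>\<eta>\<in>{\<eta>\<in>cset V B \<sigma>. \<eta> w = t}. PE \<theta> (edges V) \<eta>) = Z t" for t
    proof -
      have "(\<Sum>\<eta>\<in>cset V B \<sigma>. (if \<eta> w = t then 1 else 0) * PE \<theta> (edges V) \<eta>)
          = (\<Sum>\<eta>\<in>cset V B \<sigma>. if \<eta> w = t then PE \<theta> (edges V) \<eta> else 0)" by (rule sum.cong) auto
      also have "\<dots> = (\<Sum>\<eta>\<in>{\<eta>\<in>cset V B \<sigma>. \<eta> w = t}. PE \<theta> (edges V) \<eta>)"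
        using finite_cset[OF fin] by (simp add: sum.inter_filter)
      finally show ?thesis using Zd by simp
    qed
    have den: "(\<Sum>\<eta>\<in>cset V B \<sigma>. PE \<theta> (edges V) \<eta>) = Z 1 + Z (-1)"
    proof -
      have "(\<Sum>\<eta>\<in>cset V B \<sigma>. PE \<theta> (edges V) \<eta>)
          = (\<Sum>\<eta>\<in>cset V B \<sigma>. (if \<eta> w = 1 then 1 else 0) * PE \<theta> (edges V) \<eta> + (if \<eta> w = -1 then 1 else 0) * PE \<theta> (edges V) \<eta>)"
      proof (rule sum.cong[OF refl])
        fix \<eta> assume "\<eta> \<in> cset V B \<sigma>"
        then have "\<eta> w = 1 \<or> \<eta> w = -1" using cset_sub confs_val by blast
        then show "PE \<theta> (edges V) \<eta> = (if \<eta> w = 1 then 1 else 0) * PE \<theta> (edges V) \<eta> + (if \<eta> w = -1 then 1 else 0) * PE \<theta> (edges V) \<eta>"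
          by auto
      qed
      then show ?thesis using Zd by (simp add: sum.distrib)
    qed
    show ?thesis using kernel_marg[OF fin \<sigma>, where w=w and s=s' and \<beta>=\<beta> and B=B] num den by (simp add: \<theta>_def)
  qed
  define ZX where "ZX = (\<lambda>t. \<Sum>\<eta>\<in>cset T Bv x. (if \<eta> w = t then 1 else 0) * PE \<theta> (edges T) \<eta>)"
  define ZY where "ZY = (\<lambda>t. \<Sum>\<eta>\<in>cset F Pth y. (if \<eta> w = t then 1 else 0) * PE \<theta> (edges F) \<eta>)"
  have PX: "(\<Sum>\<eta>\<in>{\<eta>\<in>confs T. \<eta> w = s}. block_kernel \<beta> T Bv x \<eta>) = ZX s / (ZX 1 + ZX (-1))"
    by (rule red[OF finT x]) (simp add: ZX_def)
  have PY: "(\<Sum>\<eta>\<in>{\<eta>\<in>confs F. \<eta> w = s}. block_kernel \<beta> F Pth y \<eta>) = ZY s / (ZY 1 + ZY (-1))"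
    by (rule red[OF finF y]) (simp add: ZY_def)
  define a where "a = x pv"
  define \<epsilon> where "\<epsilon> = \<theta> ^ (r - l + 1) * a"
  define NX where "NX = real (card {\<eta>\<in>cset T Bv x. \<eta> w = 1})"
  define NY where "NY = real (card {\<eta>\<in>cset F Pth y. \<eta> w = 1})"
  have NX': "real (card {\<eta>\<in>cset T Bv x. \<eta> w = -1}) = NX" using count_sym[OF wBv wTv] by (simp add: NX_def)
  have NY': "real (card {\<eta>\<in>cset F Pth y. \<eta> w = -1}) = NY" using count_sym[OF wP wF] by (simp add: NY_def)
  have NXp: "NX > 0" using count_pos[OF finT x wBv wTv] by (simp add: NX_def)
  have NYp: "NY > 0" using count_pos[OF finF y wP wF] by (simp add: NY_def)
  define cX where "cX = PE \<theta> {e\<in>E3X. \<not> (fst e = w \<or> snd e = w)} x"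
  define cY where "cY = PE \<theta> {e\<in>E3Y. \<not> (fst e = w \<or> snd e = w)} y"
  define hh where "hh = (\<lambda>t. PE \<theta> Wc (x(w := t)))"
  have pm: "\<forall>u. \<sigma> u = 1 \<or> \<sigma> u = -1" if "\<sigma> \<in> confs V" for \<sigma> :: "nat list \<Rightarrow> real" and V
    using that confs_val by blast
  have cXp: "cX > 0" unfolding cX_def by (rule PE_pos[OF pm[OF x] \<theta>a])
  have cYp: "cY > 0" unfolding cY_def by (rule PE_pos[OF pm[OF y] \<theta>a])
  have hhp: "hh t > 0" if "t = 1 \<or> t = -1" for t
    unfolding hh_def by (rule PE_pos[OF _ \<theta>a]) (use pm[OF x] that in auto)
  have hY: "PE \<theta> Wc (y(w := t)) = hh t" for t
    unfolding hh_def PE_def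
  proof (rule prod.cong[OF refl])
    fix e assume e: "e \<in> Wc"
    then obtain a i where ea: "e = (a, a @ [i])" and ciT: "a @ [i] \<in> T" by (auto elim: edgesE)
    have fw: "a = w" using e ea by simp
    have "a @ [i] \<in> subtree b h w" using fw ciT by (simp add: subtree_def)
    then have "x (a @ [i]) = y (a @ [i])" using agree by blast
    then show "1 + \<theta> * (y(w := t)) (fst e) * (y(w := t)) (snd e) = 1 + \<theta> * (x(w := t)) (fst e) * (x(w := t)) (snd e)"
      using ea fw by simp
  qed
  have finE3X: "finite E3X" using finite_edges[OF finT] by simp
  have finE3Y: "finite E3Y" using finite_edges[OF finF] by simp
  have ZXf: "ZX t = (1 + \<epsilon> * t) * (NX * cX * hh t)" if "t = 1 \<or> t = -1" for t
  proof -
    have "ZX t = (1 + \<theta> ^ (r - l + 1) * x pv * t) * (real (card {\<eta>\<in>cset T Bv x. \<eta> w = t}) * PE \<theta> E3X (x(w := t)))"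
      unfolding ZX_def by (rule ZX[OF x that])
    moreover have "real (card {\<eta>\<in>cset T Bv x. \<eta> w = t}) = NX" using that NX' by (auto simp: NX_def)
    moreover have "PE \<theta> E3X (x(w := t)) = hh t * cX"
      using split_w[OF finE3X, of \<theta> x w t] E3X_w by (simp add: hh_def cX_def)
    ultimately show ?thesis by (simp add: \<epsilon>_def a_def algebra_simps)
  qed
  have ZYf: "ZY t = NY * cY * hh t" if "t = 1 \<or> t = -1" for t
  proof -
    have "ZY t = real (card {\<eta>\<in>cset F Pth y. \<eta> w = t}) * PE \<theta> E3Y (y(w := t))"
      unfolding ZY_def by (rule ZY[OF y that])
    moreover have "real (card {\<eta>\<in>cset F Pth y. \<eta> w = t}) = NY" using that NY' by (auto simp: NY_def)
    moreover have "PE \<theta> E3Y (y(w := t)) = hh t * cY"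
      using split_w[OF finE3Y, of \<theta> y w t] E3Y_w hY by (simp add: cY_def)
    ultimately show ?thesis by simp
  qed
  have a1: "a = 1 \<or> a = -1" unfolding a_def using confs_val[OF x] by blast
  have eps: "\<bar>\<epsilon>\<bar> \<le> \<theta> ^ (r - l)"
  proof -
    have "\<bar>\<epsilon>\<bar> = \<theta> ^ (r - l) * \<theta>" using a1 \<theta>0 by (auto simp: \<epsilon>_def abs_mult)
    also have "\<dots> \<le> \<theta> ^ (r - l) * 1" using \<theta>0 by (intro mult_left_mono) auto
    finally show ?thesis by simp
  qed
  have eps1: "\<bar>\<epsilon>\<bar> \<le> 1" using eps \<theta>0 by (meson order_trans power_le_one less_imp_le)
  have h1: "hh 1 > 0" and h2: "hh (-1) > 0" using hhp by auto
  have K: "NX * cX > 0" "NY * cY > 0" using NXp cXp NYp cYp by auto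
  have PXf: "ZX s / (ZX 1 + ZX (-1)) = (1 + \<epsilon> * s) * hh s / ((1 + \<epsilon>) * hh 1 + (1 - \<epsilon>) * hh (-1))"
  proof -
    have "ZX s / (ZX 1 + ZX (-1)) = ((NX * cX) * ((1 + \<epsilon> * s) * hh s)) / ((NX * cX) * ((1 + \<epsilon>) * hh 1 + (1 - \<epsilon>) * hh (-1)))"
      using ZXf[OF s] ZXf[of 1] ZXf[of "-1"] by (simp add: algebra_simps)
    then show ?thesis using NXp cXp by simp
  qed
  have PYf: "ZY s / (ZY 1 + ZY (-1)) = hh s / (hh 1 + hh (-1))"
  proof -
    have "ZY s / (ZY 1 + ZY (-1)) = ((NY * cY) * hh s) / ((NY * cY) * (hh 1 + hh (-1)))"
      using ZYf[OF s] ZYf[of 1] ZYf[of "-1"] by (simp add: algebra_simps)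
    then show ?thesis using NYp cYp by simp
  qed
  have main: "\<bar>(1 + \<epsilon> * s) * hh s / ((1 + \<epsilon>) * hh 1 + (1 - \<epsilon>) * hh (-1)) - hh s / (hh 1 + hh (-1))\<bar> \<le> \<bar>\<epsilon>\<bar>"
    using s
  proof
    assume "s = 1" then show ?thesis using tv_alg1[OF h1 h2 eps1] by simp
  next
    assume "s = -1" then show ?thesis using tv_alg2[OF h1 h2 eps1] by simp
  qed
  show ?thesis unfolding PX PY PXf PYf using main eps \<theta>_def by simp
qed


lemma single_eq:
  assumes \<beta>: "\<beta> > 0" and x: "x \<in> confs T" and y: "y \<in> confs F"
    and agree: "\<forall>u\<in>subtree b h w. x u = y u" and u: "u \<in> subtree b h w" and uw: "u \<noteq> w"
    and t: "t = 1 \<or> t = -1"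
  shows "(\<Sum>\<eta>\<in>{\<eta>\<in>confs T. \<eta> u = t}. block_kernel \<beta> T {u} x \<eta>)
       = (\<Sum>\<eta>\<in>{\<eta>\<in>confs F. \<eta> u = t}. block_kernel \<beta> F {u} y \<eta>)"
proof -
  have finT: "finite T" by (rule finite_tv)
  have finF: "finite F" using F_T finite_tv finite_subset by blast
  have uT: "u \<in> T" using u by (simp add: subtree_def)
  have uF: "u \<in> F" using u subw_F by auto
  have ends: "fst e \<in> subtree b h w \<and> snd e \<in> subtree b h w"
    if e: "e \<in> edges T" and tu: "fst e = u \<or> snd e = u" for e
  proof -
    obtain a i where ea: "e = (a, a @ [i])" and aT: "a \<in> T" and cT: "a @ [i] \<in> T" using e by (rule edgesE)
    have wu: "prefix w u" using u by (simp add: subtree_def)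
    show ?thesis
    proof (cases "a = u")
      case True then show ?thesis using ea aT cT wu by (simp add: subtree_def)
    next
      case False
      then have c: "a @ [i] = u" using tu ea by simp
      then have "prefix w a" using wu uw by auto
      then show ?thesis using ea aT cT wu c by (simp add: subtree_def)
    qed
  qed
  have Eu: "{e\<in>edges T. fst e = u \<or> snd e = u} = {e\<in>edges F. fst e = u \<or> snd e = u}"
  proof (intro set_eqI iffI)
    fix e assume e: "e \<in> {e\<in>edges T. fst e = u \<or> snd e = u}"
    then have "fst e \<in> F" "snd e \<in> F" using ends subw_F by blast+
    moreover obtain a i where "e = (a, a @ [i])" using e by (auto elim: edgesE)
    ultimately show "e \<in> {e\<in>edges F. fst e = u \<or> snd e = u}" using e by (auto simp: edges_mem)
  next
    fix e assume "e \<in> {e\<in>edges F. fst e = u \<or> snd e = u}"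
    then show "e \<in> {e\<in>edges T. fst e = u \<or> snd e = u}" using F_T by (auto simp: edges_def)
  qed
  have vals: "PE (tanh \<beta>) {e\<in>edges T. fst e = u \<or> snd e = u} (x(u := t'))
            = PE (tanh \<beta>) {e\<in>edges T. fst e = u \<or> snd e = u} (y(u := t'))" for t'
    unfolding PE_def
  proof (rule prod.cong[OF refl])
    fix e assume "e \<in> {e\<in>edges T. fst e = u \<or> snd e = u}"
    then have "fst e \<in> subtree b h w" "snd e \<in> subtree b h w" using ends by auto
    then show "1 + tanh \<beta> * (x(u := t')) (fst e) * (x(u := t')) (snd e) = 1 + tanh \<beta> * (y(u := t')) (fst e) * (y(u := t')) (snd e)"
      using agree by simp
  qed
  show ?thesis
    unfolding single_ratio[OF finT x uT \<beta> t] single_ratio[OF finF y uF \<beta> t] vals Eu[symmetric] ..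
qed


end




lemma ising_nonneg: "ising \<beta> V \<sigma> \<ge> 0"
proof -
  have "\<And>\<eta>. gibbs_weight \<beta> V \<eta> \<ge> 0" using gw_pos less_imp_le by blast
  then have "(\<Sum>\<eta>\<in>confs V. gibbs_weight \<beta> V \<eta>) \<ge> 0" by (simp add: sum_nonneg)
  then show ?thesis unfolding ising_def using \<open>\<And>\<eta>. gibbs_weight \<beta> V \<eta> \<ge> 0\<close> by simp
qed

lemma bk_nonneg: "block_kernel \<beta> V B \<sigma> \<sigma>' \<ge> 0"
  unfolding block_kernel_def using ising_nonneg by (auto intro!: divide_nonneg_nonneg sum_nonneg)

lemma bk_supp: "block_kernel \<beta> V B \<sigma> \<sigma>' \<noteq> 0 \<Longrightarrow> \<sigma>' \<in> cset V B \<sigma>"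
  unfolding block_kernel_def cset_def by (auto split: if_splits)

lemma qm_eq:
  assumes "finite S" "x \<in> S" "f x \<noteq> k"
  shows "qm S \<mu> f x k = (\<Sum>a\<in>{a\<in>S. f a = k}. \<mu> x a)"
proof -
  have "qm S \<mu> f x k = (\<Sum>a\<in>S. if f a = k then \<mu> x a else 0)"
    unfolding qm_def using assms by (subst (2) sum.remove[of _ x]) auto
  also have "\<dots> = (\<Sum>a\<in>{a\<in>S. f a = k}. \<mu> x a)" using assms by (simp add: sum.inter_filter)
  finally show ?thesis .
qed

lemma qm_zero: "\<forall>a\<in>S. f a \<noteq> k \<Longrightarrow> qm S \<mu> f x k = 0"
  unfolding qm_def by (rule sum.neutral) auto

lemma sum_blocks:
  assumes fin1: "finite I" and fin2: "finite J" and inj: "inj_on Bf I"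
    and disj: "\<forall>i\<in>I. \<forall>u\<in>J. Bf i \<noteq> {u}"
  shows "(\<Sum>B\<in>Bf ` I \<union> (\<lambda>u. {u}) ` J. k B) = (\<Sum>i\<in>I. k (Bf i)) + (\<Sum>u\<in>J. k {u})"
proof -
  have "(\<Sum>B\<in>Bf ` I \<union> (\<lambda>u. {u}) ` J. k B) = (\<Sum>B\<in>Bf ` I. k B) + (\<Sum>B\<in>(\<lambda>u. {u}) ` J. k B)"
    by (rule sum.union_disjoint) (use fin1 fin2 disj in auto)
  also have "(\<Sum>B\<in>Bf ` I. k B) = (\<Sum>i\<in>I. k (Bf i))" by (rule sum.reindex_cong[OF inj refl refl])
  also have "(\<Sum>B\<in>(\<lambda>u. {u}) ` J. k B) = (\<Sum>u\<in>J. k {u})" by (rule sum.reindex_cong[of "\<lambda>u. {u}"]) (auto simp: inj_on_def)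
  finally show ?thesis .
qed


lemma leave_single_G:
  assumes fin1: "finite V1" and fin2: "finite V2" and G1: "G \<subseteq> V1" and G2: "G \<subseteq> V2" and uG: "u \<in> G"
    and xy: "(x, y) \<in> {(x, y) \<in> confs V1 \<times> confs V2. \<forall>u\<in>G. x u = y u}"
    and eq: "\<And>t. t = 1 \<or> t = -1 \<Longrightarrow> (\<Sum>\<eta>\<in>{\<eta>\<in>confs V1. \<eta> u = t}. block_kernel \<beta> V1 {u} x \<eta>)
                 = (\<Sum>\<eta>\<in>{\<eta>\<in>confs V2. \<eta> u = t}. block_kernel \<beta> V2 {u} y \<eta>)"
  shows "(\<Sum>z'\<in>confs V1 \<times> confs V2 - {(x, y) \<in> confs V1 \<times> confs V2. \<forall>u\<in>G. x u = y u}.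
           qp (confs V1) (confs V2) (block_kernel \<beta> V1 {u}) (block_kernel \<beta> V2 {u}) (\<lambda>a. a u) (\<lambda>a. a u) (x, y) z') \<le> 0"
proof -
  let ?A = "{(x, y) \<in> confs V1 \<times> confs V2. \<forall>u\<in>G. x u = y u}"
  have x: "x \<in> confs V1" and y: "y \<in> confs V2" and ag: "\<forall>u\<in>G. x u = y u" using xy by auto
  have finS1: "finite (confs V1)" and finS2: "finite (confs V2)" using finite_confs fin1 fin2 by auto
  define k1 where "k1 = - x u"
  have xu: "x u = 1 \<or> x u = -1" using confs_val[OF x] .
  have k1: "k1 = 1 \<or> k1 = -1" "x u \<noteq> k1" using xu by (auto simp: k1_def)
  have yu: "y u = x u" using ag uG by simp
  have sup1: "x' \<in> cset V1 {u} x" if "block_kernel \<beta> V1 {u} x x' > 0" for x'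
    using bk_supp[of \<beta> V1 "{u}" x x'] that by simp
  have sup2: "y' \<in> cset V2 {u} y" if "block_kernel \<beta> V2 {u} y y' > 0" for y'
    using bk_supp[of \<beta> V2 "{u}" y y'] that by simp
  have xs: "x' u' = x u'" if "x' \<in> cset V1 {u} x" "u' \<in> G" "u' \<noteq> u" for x' u'
    using that G1 by (auto simp: cset_def)
  have ys: "y' u' = y u'" if "y' \<in> cset V2 {u} y" "u' \<in> G" "u' \<noteq> u" for y' u'
    using that G2 by (auto simp: cset_def)
  have "(\<Sum>z'\<in>confs V1 \<times> confs V2 - ?A.
           qp (confs V1) (confs V2) (block_kernel \<beta> V1 {u}) (block_kernel \<beta> V2 {u}) (\<lambda>a. a u) (\<lambda>a. a u) (x, y) z')
     \<le> \<bar>qm (confs V1) (block_kernel \<beta> V1 {u}) (\<lambda>a. a u) x k1 - qm (confs V2) (block_kernel \<beta> V2 {u}) (\<lambda>a. a u) y k1\<bar>"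
  proof (rule qp_leave[OF finS1 finS2 x y])
    show "\<forall>a b. 0 \<le> block_kernel \<beta> V1 {u} a b" "\<forall>a b. 0 \<le> block_kernel \<beta> V2 {u} a b" using bk_nonneg by auto
    show "\<forall>x'\<in>confs V1. \<forall>y'\<in>confs V2. x' \<noteq> x \<longrightarrow> y' \<noteq> y \<longrightarrow> block_kernel \<beta> V1 {u} x x' > 0
            \<longrightarrow> block_kernel \<beta> V2 {u} y y' > 0 \<longrightarrow> x' u = y' u \<longrightarrow> (x', y') \<in> ?A"
    proof (intro ballI impI)
      fix x' y' assume x': "x' \<in> confs V1" and y': "y' \<in> confs V2" and p1: "block_kernel \<beta> V1 {u} x x' > 0"
        and p2: "block_kernel \<beta> V2 {u} y y' > 0" and e: "x' u = y' u"
      have "\<forall>u'\<in>G. x' u' = y' u'"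
      proof
        fix u' assume u'G: "u' \<in> G"
        show "x' u' = y' u'"
        proof (cases "u' = u")
          case True then show ?thesis using e by simp
        next
          case False then show ?thesis using xs[OF sup1[OF p1] u'G] ys[OF sup2[OF p2] u'G] ag u'G by simp
        qed
      qed
      then show "(x', y') \<in> ?A" using x' y' by simp
    qed
    show "\<forall>x'\<in>confs V1. x' \<noteq> x \<longrightarrow> block_kernel \<beta> V1 {u} x x' > 0 \<longrightarrow> (x', y) \<notin> ?A \<longrightarrow> x' u = k1"
    proof (intro ballI impI)
      fix x' assume x': "x' \<in> confs V1" and p1: "block_kernel \<beta> V1 {u} x x' > 0" and nA: "(x', y) \<notin> ?A"
      then obtain u' where uG': "u' \<in> G" and d: "x' u' \<noteq> y u'" using y by auto
      have "u' = u" using xs[OF sup1[OF p1] uG'] ag uG' d by auto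
      then show "x' u = k1" using d yu confs_val[OF x', of u] xu by (auto simp: k1_def)
    qed
    show "\<forall>y'\<in>confs V2. y' \<noteq> y \<longrightarrow> block_kernel \<beta> V2 {u} y y' > 0 \<longrightarrow> (x, y') \<notin> ?A \<longrightarrow> y' u = k1"
    proof (intro ballI impI)
      fix y' assume y': "y' \<in> confs V2" and p2: "block_kernel \<beta> V2 {u} y y' > 0" and nA: "(x, y') \<notin> ?A"
      then obtain u' where uG': "u' \<in> G" and d: "x u' \<noteq> y' u'" using x by auto
      have "u' = u" using ys[OF sup2[OF p2] uG'] ag uG' d by auto
      then show "y' u = k1" using d confs_val[OF y', of u] xu by (auto simp: k1_def)
    qed
  qed
  also have "qm (confs V1) (block_kernel \<beta> V1 {u}) (\<lambda>a. a u) x k1 = (\<Sum>a\<in>{a\<in>confs V1. a u = k1}. block_kernel \<beta> V1 {u} x a)"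
    by (rule qm_eq[OF finS1 x]) (use k1 in simp)
  also have "qm (confs V2) (block_kernel \<beta> V2 {u}) (\<lambda>a. a u) y k1 = (\<Sum>a\<in>{a\<in>confs V2. a u = k1}. block_kernel \<beta> V2 {u} y a)"
    by (rule qm_eq[OF finS2 y]) (use k1 yu in simp)
  finally show ?thesis using eq[OF k1(1)] by simp
qed

lemma leave_single_nonG:
  assumes fin1: "finite V1" and fin2: "finite V2" and G1: "G \<subseteq> V1" and uG: "u \<notin> G" and uV: "u \<in> V1"
    and xy: "(x, y) \<in> {(x, y) \<in> confs V1 \<times> confs V2. \<forall>u\<in>G. x u = y u}"
    and \<nu>0: "\<forall>a b. 0 \<le> \<nu> a b" and \<nu>s: "\<And>y'. \<nu> y y' > 0 \<Longrightarrow> \<forall>u'\<in>G. y' u' = y u'"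
  shows "(\<Sum>z'\<in>confs V1 \<times> confs V2 - {(x, y) \<in> confs V1 \<times> confs V2. \<forall>u\<in>G. x u = y u}.
           qp (confs V1) (confs V2) (block_kernel \<beta> V1 {u}) \<nu> (\<lambda>a. a u) (\<lambda>a. a u) (x, y) z') \<le> 0"
proof -
  let ?A = "{(x, y) \<in> confs V1 \<times> confs V2. \<forall>u\<in>G. x u = y u}"
  have x: "x \<in> confs V1" and y: "y \<in> confs V2" and ag: "\<forall>u\<in>G. x u = y u" using xy by auto
  have finS1: "finite (confs V1)" and finS2: "finite (confs V2)" using finite_confs fin1 fin2 by auto
  have sup1: "\<forall>u'\<in>G. x' u' = x u'" if "block_kernel \<beta> V1 {u} x x' > 0" for x'
    using bk_supp[of \<beta> V1 "{u}" x x'] that G1 uG by (auto simp: cset_def)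
  have "(\<Sum>z'\<in>confs V1 \<times> confs V2 - ?A.
           qp (confs V1) (confs V2) (block_kernel \<beta> V1 {u}) \<nu> (\<lambda>a. a u) (\<lambda>a. a u) (x, y) z')
     \<le> \<bar>qm (confs V1) (block_kernel \<beta> V1 {u}) (\<lambda>a. a u) x 0 - qm (confs V2) \<nu> (\<lambda>a. a u) y 0\<bar>"
  proof (rule qp_leave[OF finS1 finS2 x y _ \<nu>0])
    show "\<forall>a b. 0 \<le> block_kernel \<beta> V1 {u} a b" using bk_nonneg by auto
    show "\<forall>x'\<in>confs V1. \<forall>y'\<in>confs V2. x' \<noteq> x \<longrightarrow> y' \<noteq> y \<longrightarrow> block_kernel \<beta> V1 {u} x x' > 0
            \<longrightarrow> \<nu> y y' > 0 \<longrightarrow> x' u = y' u \<longrightarrow> (x', y') \<in> ?A"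
      using sup1 \<nu>s ag by auto
    show "\<forall>x'\<in>confs V1. x' \<noteq> x \<longrightarrow> block_kernel \<beta> V1 {u} x x' > 0 \<longrightarrow> (x', y) \<notin> ?A \<longrightarrow> x' u = 0"
      using sup1 ag y by auto
    show "\<forall>y'\<in>confs V2. y' \<noteq> y \<longrightarrow> \<nu> y y' > 0 \<longrightarrow> (x, y') \<notin> ?A \<longrightarrow> y' u = 0"
      using \<nu>s ag x by auto
  qed
  also have "qm (confs V1) (block_kernel \<beta> V1 {u}) (\<lambda>a. a u) x 0 = 0"
  proof (rule qm_zero, intro ballI)
    fix a assume "a \<in> confs V1" then show "a u \<noteq> 0" using confs_val[of a V1 u] by auto
  qed
  also have "qm (confs V2) \<nu> (\<lambda>a. a u) y 0 = 0"
  proof (rule qm_zero, intro ballI)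
    fix a assume "a \<in> confs V2" then show "a u \<noteq> 0" using confs_val[of a V2 u] by auto
  qed
  finally show ?thesis by simp
qed


context vctx
begin

abbreviation "G \<equiv> set_G b h l wf"

lemma G_pre: "u \<in> G \<Longrightarrow> \<exists>v'\<in>level b h l. prefix (wf v') u \<and> u \<in> T \<and> prefix v' u"
proof -
  assume "u \<in> G"
  then obtain v' where v': "v' \<in> level b h l" "u \<in> subtree b h (wf v')" by (auto simp: set_G_def)
  have "prefix v' (wf v')" using wfa v' by auto
  then show ?thesis using v' by (auto simp: subtree_def intro: prefix_order.trans)
qed

lemma G_Bv: "u \<in> G \<Longrightarrow> u \<in> Bv \<Longrightarrow> u = w"
proof -
  assume uG: "u \<in> G" and uB: "u \<in> Bv"
  obtain v' where v': "v' \<in> level b h l" "prefix (wf v') u" "prefix v' u" using G_pre[OF uG] by blast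
  have vu: "prefix v u" using uB Bv_iff by blast
  have "v' = v" using prefix_eq_len[OF v'(3) vu] v'(1) lenv by (simp add: level_def)
  then have "prefix w u" using v' by simp
  then show "u = w" using uB Bv_iff by blast
qed

lemma subw_G: "subtree b h w \<subseteq> G" using vL by (auto simp: set_G_def)
lemma G_F: "G \<subseteq> F" by (auto simp: set_G_def forest_F_def)

lemma vPth: "v \<in> Pth" using take_Pth[of l] lr vtake by simp
lemma wPth: "w \<in> Pth" using take_Pth[of r] lr lenw by simp
lemma vw: "v \<noteq> w" using lenv lenw lr by auto

lemma leave_v:
  assumes \<beta>: "\<beta> > 0" and xy: "(x, y) \<in> {(x, y) \<in> confs T \<times> confs F. \<forall>u\<in>G. x u = y u}"
  shows "(\<Sum>z'\<in>confs T \<times> confs F - {(x, y) \<in> confs T \<times> confs F. \<forall>u\<in>G. x u = y u}.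
            qp (confs T) (confs F) (block_kernel \<beta> T Bv) (block_kernel \<beta> F Pth) (\<lambda>a. a w) (\<lambda>a. a w) (x, y) z')
         \<le> tanh \<beta> ^ (r - l)"
proof -
  let ?A = "{(x, y) \<in> confs T \<times> confs F. \<forall>u\<in>G. x u = y u}"
  have x: "x \<in> confs T" and y: "y \<in> confs F" and ag: "\<forall>u\<in>G. x u = y u" using xy by auto
  have finT: "finite (confs T)" using finite_confs[OF finite_tv] .
  have finF: "finite (confs F)" using finite_confs F_T finite_tv finite_subset by metis
  define k1 where "k1 = - x w"
  have xw: "x w = 1 \<or> x w = -1" using confs_val[OF x] .
  have k1: "k1 = 1 \<or> k1 = -1" "x w \<noteq> k1" using xw by (auto simp: k1_def)
  have wG: "w \<in> G" using subw_G wT by (auto simp: subtree_def)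
  have yw: "y w = x w" using ag wG by simp
  have notB: "u \<notin> Bv" "u \<notin> Pth" if "u \<in> G" "u \<noteq> w" for u using G_Bv that Pth_Bv by auto
  have GT: "u \<in> T" "u \<in> F" if "u \<in> G" for u using that G_F F_T by auto
  have xs: "x' u = x u" if "x' \<in> cset T Bv x" "u \<in> G" "u \<noteq> w" for x' u
    using that notB GT by (auto simp: cset_def)
  have ys: "y' u = y u" if "y' \<in> cset F Pth y" "u \<in> G" "u \<noteq> w" for y' u
    using that notB GT by (auto simp: cset_def)
  have sup1: "x' \<in> cset T Bv x" if "block_kernel \<beta> T Bv x x' > 0" for x'
    using bk_supp[of \<beta> T Bv x x'] that by simp
  have sup2: "y' \<in> cset F Pth y" if "block_kernel \<beta> F Pth y y' > 0" for y'
    using bk_supp[of \<beta> F Pth y y'] that by simp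
  have "(\<Sum>z'\<in>confs T \<times> confs F - ?A.
            qp (confs T) (confs F) (block_kernel \<beta> T Bv) (block_kernel \<beta> F Pth) (\<lambda>a. a w) (\<lambda>a. a w) (x, y) z')
     \<le> \<bar>qm (confs T) (block_kernel \<beta> T Bv) (\<lambda>a. a w) x k1 - qm (confs F) (block_kernel \<beta> F Pth) (\<lambda>a. a w) y k1\<bar>"
  proof (rule qp_leave[OF finT finF x y])
    show "\<forall>a b. 0 \<le> block_kernel \<beta> T Bv a b" "\<forall>a b. 0 \<le> block_kernel \<beta> F Pth a b" using bk_nonneg by auto
    show "\<forall>x'\<in>confs T. \<forall>y'\<in>confs F. x' \<noteq> x \<longrightarrow> y' \<noteq> y \<longrightarrow> block_kernel \<beta> T Bv x x' > 0
            \<longrightarrow> block_kernel \<beta> F Pth y y' > 0 \<longrightarrow> x' w = y' w \<longrightarrow> (x', y') \<in> ?A"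
    proof (intro ballI impI)
      fix x' y' assume x': "x' \<in> confs T" and y': "y' \<in> confs F" and p1: "block_kernel \<beta> T Bv x x' > 0"
        and p2: "block_kernel \<beta> F Pth y y' > 0" and e: "x' w = y' w"
      have "\<forall>u\<in>G. x' u = y' u"
      proof
        fix u assume uG: "u \<in> G"
        show "x' u = y' u"
        proof (cases "u = w")
          case True then show ?thesis using e by simp
        next
          case False then show ?thesis using xs[OF sup1[OF p1] uG] ys[OF sup2[OF p2] uG] ag uG by simp
        qed
      qed
      then show "(x', y') \<in> ?A" using x' y' by simp
    qed
    show "\<forall>x'\<in>confs T. x' \<noteq> x \<longrightarrow> block_kernel \<beta> T Bv x x' > 0 \<longrightarrow> (x', y) \<notin> ?A \<longrightarrow> x' w = k1"
    proof (intro ballI impI)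
      fix x' assume x': "x' \<in> confs T" and p1: "block_kernel \<beta> T Bv x x' > 0" and nA: "(x', y) \<notin> ?A"
      then obtain u where uG: "u \<in> G" and d: "x' u \<noteq> y u" using y by auto
      have "u = w" using xs[OF sup1[OF p1] uG] ag uG d by auto
      then show "x' w = k1" using d yw confs_val[OF x', of w] xw by (auto simp: k1_def)
    qed
    show "\<forall>y'\<in>confs F. y' \<noteq> y \<longrightarrow> block_kernel \<beta> F Pth y y' > 0 \<longrightarrow> (x, y') \<notin> ?A \<longrightarrow> y' w = k1"
    proof (intro ballI impI)
      fix y' assume y': "y' \<in> confs F" and p2: "block_kernel \<beta> F Pth y y' > 0" and nA: "(x, y') \<notin> ?A"
      then obtain u where uG: "u \<in> G" and d: "x u \<noteq> y' u" using x by auto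
      have "u = w" using ys[OF sup2[OF p2] uG] ag uG d by auto
      then show "y' w = k1" using d confs_val[OF y', of w] xw by (auto simp: k1_def)
    qed
  qed
  also have "qm (confs T) (block_kernel \<beta> T Bv) (\<lambda>a. a w) x k1 = (\<Sum>a\<in>{a\<in>confs T. a w = k1}. block_kernel \<beta> T Bv x a)"
    by (rule qm_eq[OF finT x]) (use k1 in simp)
  also have "qm (confs F) (block_kernel \<beta> F Pth) (\<lambda>a. a w) y k1 = (\<Sum>a\<in>{a\<in>confs F. a w = k1}. block_kernel \<beta> F Pth y a)"
    by (rule qm_eq[OF finF y]) (use k1 yw in simp)
  also have "\<bar>(\<Sum>a\<in>{a\<in>confs T. a w = k1}. block_kernel \<beta> T Bv x a) - (\<Sum>a\<in>{a\<in>confs F. a w = k1}. block_kernel \<beta> F Pth y a)\<bar>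
      \<le> tanh \<beta> ^ (r - l)"
    by (rule tv_local[OF \<beta> x y _ k1(1)]) (use ag subw_G in blast)
  finally show ?thesis .
qed


end


theorem mainTheorem18:
  fixes b h l r :: nat and \<beta> :: real and w :: "nat list \<Rightarrow> nat list"
    and X0 Y0 :: "nat list \<Rightarrow> real"
  assumes "b \<ge> 2" and "\<beta> > 0"
    and "1 \<le> l" and "l < r" and "r \<le> h"
    and "\<forall>v\<in>level b h l. w v \<in> level b h r \<and> prefix v (w v)"
    and "X0 \<in> confs (tree_vertices b h)" and "Y0 \<in> confs (forest_F b h l w)"
    and "\<forall>u\<in>set_G b h l w. X0 u = Y0 u"
  shows "\<exists>Q. markov_coupling
              (confs (tree_vertices b h)) (block_rate \<beta> (tree_vertices b h) (blocks_X b h l w))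
              (confs (forest_F b h l w)) (block_rate \<beta> (forest_F b h l w) (blocks_Y b h l w)) Q
          \<and> (\<forall>t\<ge>0. stay_prob (confs (tree_vertices b h) \<times> confs (forest_F b h l w)) Q
                      {(x, y) \<in> confs (tree_vertices b h) \<times> confs (forest_F b h l w).
                         \<forall>u\<in>set_G b h l w. x u = y u}
                      (X0, Y0) t
                    \<ge> exp (- ((tanh \<beta>) ^ (r - l) * real b ^ l * t)))"
proof -
  define T where "T = tree_vertices b h"
  define F where "F = forest_F b h l w"
  define H where "H = level b h l"
  define W where "W = w ` H"
  define G where "G = set_G b h l w"
  define S1 where "S1 = confs T"
  define S2 where "S2 = confs F"
  define A where "A = {(x, y) \<in> S1 \<times> S2. \<forall>u\<in>G. x u = y u}"
  define \<theta> where "\<theta> = tanh \<beta>"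
  define Bf where "Bf = (\<lambda>v. block_B b h v (w v))"
  define Pf where "Pf = (\<lambda>v. path_L v (w v))"
  have vc: "vctx b h l r w v" if "v \<in> H" for v
    unfolding vctx_def using assms that by (simp add: H_def)
  have v0: "replicate l 0 \<in> H" using assms by (auto simp: H_def level_def tree_vertices_def)
  have finT: "finite T" unfolding T_def by (rule finite_tv)
  have FT: "F \<subseteq> T" unfolding F_def T_def using vctx.F_T[OF vc[OF v0]] .
  have finF: "finite F" using finT FT finite_subset by blast
  have HT: "H \<subseteq> T" by (auto simp: H_def T_def level_def)
  have finH: "finite H" using finT HT finite_subset by blast
  have GF: "G \<subseteq> F" unfolding G_def F_def using vctx.G_F[OF vc[OF v0]] .
  have WF: "W \<subseteq> F"
  proof
    fix u assume "u \<in> W"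
    then obtain v where v: "v \<in> H" "u = w v" by (auto simp: W_def)
    then show "u \<in> F" using vctx.wPth[OF vc[OF v(1)]] vctx.Pth_F[OF vc[OF v(1)]] by (auto simp: F_def)
  qed
  have finS1: "finite S1" unfolding S1_def using finite_confs[OF finT] .
  have finS2: "finite S2" unfolding S2_def using finite_confs[OF finF] .
  have kn: "\<forall>a c. 0 \<le> block_kernel \<beta> V B a c" for V B using bk_nonneg by blast
  have lenH: "length v = l" if "v \<in> H" for v using that by (simp add: H_def level_def)
  have injB: "inj_on Bf H"
  proof (rule inj_onI)
    fix v1 v2 assume v: "v1 \<in> H" "v2 \<in> H" and eq: "Bf v1 = Bf v2"
    have "v1 \<in> block_B b h v1 (w v1)" using vctx.vPth[OF vc[OF v(1)]] vctx.Pth_Bv[OF vc[OF v(1)]] by blast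
    then have "v1 \<in> block_B b h v2 (w v2)" using eq by (simp add: Bf_def)
    then have "prefix v2 v1" using vctx.Bv_iff[OF vc[OF v(2)], of v1] by blast
    moreover have "length v2 = length v1" using lenH v by simp
    ultimately show "v1 = v2" using prefix_eq_len[of v2 v1 v1] by simp
  qed
  have injP: "inj_on Pf H"
  proof (rule inj_onI)
    fix v1 v2 assume v: "v1 \<in> H" "v2 \<in> H" and eq: "Pf v1 = Pf v2"
    have "v1 \<in> path_L v1 (w v1)" using vctx.vPth[OF vc[OF v(1)]] .
    then have "v1 \<in> path_L v2 (w v2)" using eq by (simp add: Pf_def)
    then have "prefix v2 v1" by (simp add: path_L_def)
    moreover have "length v2 = length v1" using lenH v by simp
    ultimately show "v1 = v2" using prefix_eq_len[of v2 v1 v1] by simp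
  qed
  have disjB: "\<forall>v\<in>H. \<forall>u\<in>T - W. Bf v \<noteq> {u}"
  proof (intro ballI)
    fix v u assume v: "v \<in> H"
    have "v \<in> block_B b h v (w v)" "w v \<in> block_B b h v (w v)"
      using vctx.vPth[OF vc[OF v]] vctx.wPth[OF vc[OF v]] vctx.Pth_Bv[OF vc[OF v]] by blast+
    moreover have "v \<noteq> w v" using vctx.vw[OF vc[OF v]] .
    ultimately show "Bf v \<noteq> {u}" unfolding Bf_def by (metis singletonD)
  qed
  have disjP: "\<forall>v\<in>H. \<forall>u\<in>F - W. Pf v \<noteq> {u}"
  proof (intro ballI)
    fix v u assume v: "v \<in> H"
    have "v \<in> path_L v (w v)" "w v \<in> path_L v (w v)" using vctx.vPth[OF vc[OF v]] vctx.wPth[OF vc[OF v]] by blast+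
    moreover have "v \<noteq> w v" using vctx.vw[OF vc[OF v]] .
    ultimately show "Pf v \<noteq> {u}" unfolding Pf_def by (metis singletonD)
  qed
  have TW: "T - W = (F - W) \<union> (T - F)" and TWd: "(F - W) \<inter> (T - F) = {}" using FT WF by auto
  have rateX: "block_rate \<beta> T (blocks_X b h l w) x x'
      = (\<Sum>v\<in>H. block_kernel \<beta> T (Bf v) x x') + (\<Sum>u\<in>F - W. block_kernel \<beta> T {u} x x')
        + (\<Sum>u\<in>T - F. block_kernel \<beta> T {u} x x')" for x x'
  proof -
    have "block_rate \<beta> T (blocks_X b h l w) x x' = (\<Sum>v\<in>H. block_kernel \<beta> T (Bf v) x x') + (\<Sum>u\<in>T - W. block_kernel \<beta> T {u} x x')"
      unfolding block_rate_def blocks_X_def T_def[symmetric] H_def[symmetric] W_def[symmetric] Bf_def[symmetric]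
      by (rule sum_blocks[OF finH _ injB disjB]) (use finT in simp)
    also have "(\<Sum>u\<in>T - W. block_kernel \<beta> T {u} x x') = (\<Sum>u\<in>F - W. block_kernel \<beta> T {u} x x') + (\<Sum>u\<in>T - F. block_kernel \<beta> T {u} x x')"
      unfolding TW by (rule sum.union_disjoint) (use finT finF TWd in auto)
    finally show ?thesis by simp
  qed
  have rateY: "block_rate \<beta> F (blocks_Y b h l w) y y'
      = (\<Sum>v\<in>H. block_kernel \<beta> F (Pf v) y y') + (\<Sum>u\<in>F - W. block_kernel \<beta> F {u} y y')" for y y'
    unfolding block_rate_def blocks_Y_def F_def[symmetric] H_def[symmetric] W_def[symmetric] Pf_def[symmetric]
    by (rule sum_blocks[OF finH _ injP disjP]) (use finF in simp)
  define Q where "Q = (\<lambda>z z'.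
      (\<Sum>v\<in>H. qp S1 S2 (block_kernel \<beta> T (Bf v)) (block_kernel \<beta> F (Pf v)) (\<lambda>a. a (w v)) (\<lambda>a. a (w v)) z z')
    + (\<Sum>u\<in>F - W. qp S1 S2 (block_kernel \<beta> T {u}) (block_kernel \<beta> F {u}) (\<lambda>a. a u) (\<lambda>a. a u) z z')
    + (\<Sum>u\<in>T - F. qp S1 S2 (block_kernel \<beta> T {u}) (\<lambda>_ _. 0) (\<lambda>a. a u) (\<lambda>a. a u) z z'))"
  have Qnn: "Q z z' \<ge> 0" for z z'
    unfolding Q_def by (intro add_nonneg_nonneg sum_nonneg qp_nonneg) (auto simp: bk_nonneg)
  have mc: "markov_coupling S1 (block_rate \<beta> T (blocks_X b h l w)) S2 (block_rate \<beta> F (blocks_Y b h l w)) Q"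
    unfolding markov_coupling_def
  proof (intro conjI ballI impI)
    fix z z' assume "z \<in> S1 \<times> S2" "z' \<in> S1 \<times> S2" "z' \<noteq> z"
    show "0 \<le> Q z z'" by (rule Qnn)
  next
    fix x y x' assume x: "x \<in> S1" and y: "y \<in> S2" and x': "x' \<in> S1" and xx: "x' \<noteq> x"
    let ?f1 = "\<lambda>v y'. qp S1 S2 (block_kernel \<beta> T (Bf v)) (block_kernel \<beta> F (Pf v)) (\<lambda>a. a (w v)) (\<lambda>a. a (w v)) (x, y) (x', y')"
    let ?f2 = "\<lambda>u y'. qp S1 S2 (block_kernel \<beta> T {u}) (block_kernel \<beta> F {u}) (\<lambda>a. a u) (\<lambda>a. a u) (x, y) (x', y')"
    let ?f3 = "\<lambda>u y'. qp S1 S2 (block_kernel \<beta> T {u}) (\<lambda>_ _. 0) (\<lambda>a. a u) (\<lambda>a. a u) (x, y) (x', y')"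
    have "(\<Sum>y'\<in>S2. Q (x, y) (x', y')) = (\<Sum>y'\<in>S2. \<Sum>v\<in>H. ?f1 v y') + (\<Sum>y'\<in>S2. \<Sum>u\<in>F - W. ?f2 u y') + (\<Sum>y'\<in>S2. \<Sum>u\<in>T - F. ?f3 u y')"
      unfolding Q_def by (simp only: sum.distrib)
    also have "(\<Sum>y'\<in>S2. \<Sum>v\<in>H. ?f1 v y') = (\<Sum>v\<in>H. \<Sum>y'\<in>S2. ?f1 v y')" by (rule sum.swap)
    also have "(\<Sum>y'\<in>S2. \<Sum>u\<in>F - W. ?f2 u y') = (\<Sum>u\<in>F - W. \<Sum>y'\<in>S2. ?f2 u y')" by (rule sum.swap)
    also have "(\<Sum>y'\<in>S2. \<Sum>u\<in>T - F. ?f3 u y') = (\<Sum>u\<in>T - F. \<Sum>y'\<in>S2. ?f3 u y')" by (rule sum.swap)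
    also have "(\<Sum>v\<in>H. \<Sum>y'\<in>S2. ?f1 v y') = (\<Sum>v\<in>H. block_kernel \<beta> T (Bf v) x x')"
      by (rule sum.cong[OF refl]) (rule qp_margX[OF finS2 y xx])
    also have "(\<Sum>u\<in>F - W. \<Sum>y'\<in>S2. ?f2 u y') = (\<Sum>u\<in>F - W. block_kernel \<beta> T {u} x x')"
      by (rule sum.cong[OF refl]) (rule qp_margX[OF finS2 y xx])
    also have "(\<Sum>u\<in>T - F. \<Sum>y'\<in>S2. ?f3 u y') = (\<Sum>u\<in>T - F. block_kernel \<beta> T {u} x x')"
      by (rule sum.cong[OF refl]) (rule qp_margX[OF finS2 y xx])
    finally show "(\<Sum>y'\<in>S2. Q (x, y) (x', y')) = block_rate \<beta> T (blocks_X b h l w) x x'"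
      unfolding rateX .
  next
    fix x y y' assume x: "x \<in> S1" and y: "y \<in> S2" and y': "y' \<in> S2" and yy: "y' \<noteq> y"
    let ?f1 = "\<lambda>v x'. qp S1 S2 (block_kernel \<beta> T (Bf v)) (block_kernel \<beta> F (Pf v)) (\<lambda>a. a (w v)) (\<lambda>a. a (w v)) (x, y) (x', y')"
    let ?f2 = "\<lambda>u x'. qp S1 S2 (block_kernel \<beta> T {u}) (block_kernel \<beta> F {u}) (\<lambda>a. a u) (\<lambda>a. a u) (x, y) (x', y')"
    let ?f3 = "\<lambda>u x'. qp S1 S2 (block_kernel \<beta> T {u}) (\<lambda>_ _. 0) (\<lambda>a. a u) (\<lambda>a. a u) (x, y) (x', y')"
    have "(\<Sum>x'\<in>S1. Q (x, y) (x', y')) = (\<Sum>x'\<in>S1. \<Sum>v\<in>H. ?f1 v x') + (\<Sum>x'\<in>S1. \<Sum>u\<in>F - W. ?f2 u x') + (\<Sum>x'\<in>S1. \<Sum>u\<in>T - F. ?f3 u x')"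
      unfolding Q_def by (simp only: sum.distrib)
    also have "(\<Sum>x'\<in>S1. \<Sum>v\<in>H. ?f1 v x') = (\<Sum>v\<in>H. \<Sum>x'\<in>S1. ?f1 v x')" by (rule sum.swap)
    also have "(\<Sum>x'\<in>S1. \<Sum>u\<in>F - W. ?f2 u x') = (\<Sum>u\<in>F - W. \<Sum>x'\<in>S1. ?f2 u x')" by (rule sum.swap)
    also have "(\<Sum>x'\<in>S1. \<Sum>u\<in>T - F. ?f3 u x') = (\<Sum>u\<in>T - F. \<Sum>x'\<in>S1. ?f3 u x')" by (rule sum.swap)
    also have "(\<Sum>v\<in>H. \<Sum>x'\<in>S1. ?f1 v x') = (\<Sum>v\<in>H. block_kernel \<beta> F (Pf v) y y')"
      by (rule sum.cong[OF refl]) (rule qp_margY[OF finS1 x yy])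
    also have "(\<Sum>u\<in>F - W. \<Sum>x'\<in>S1. ?f2 u x') = (\<Sum>u\<in>F - W. block_kernel \<beta> F {u} y y')"
      by (rule sum.cong[OF refl]) (rule qp_margY[OF finS1 x yy])
    also have "(\<Sum>u\<in>T - F. \<Sum>x'\<in>S1. ?f3 u x') = 0"
      by (rule sum.neutral) (use qp_margY[OF finS1 x yy] in auto)
    finally show "(\<Sum>x'\<in>S1. Q (x, y) (x', y')) = block_rate \<beta> F (blocks_Y b h l w) y y'"
      unfolding rateY by simp
  qed
  have GT: "G \<subseteq> T" using GF FT by blast
  have leave: "(\<Sum>z'\<in>S1 \<times> S2 - A. Q z z') \<le> \<theta> ^ (r - l) * real b ^ l" if zA: "z \<in> A" for z
  proof -
    obtain x y where z: "z = (x, y)" by (cases z)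
    have xyA: "(x, y) \<in> A" using zA z by simp
    have x: "x \<in> confs T" and y: "y \<in> confs F" and ag: "\<forall>u\<in>G. x u = y u" using xyA by (auto simp: A_def S1_def S2_def)
    let ?f1 = "\<lambda>v z'. qp S1 S2 (block_kernel \<beta> T (Bf v)) (block_kernel \<beta> F (Pf v)) (\<lambda>a. a (w v)) (\<lambda>a. a (w v)) (x, y) z'"
    let ?f2 = "\<lambda>u z'. qp S1 S2 (block_kernel \<beta> T {u}) (block_kernel \<beta> F {u}) (\<lambda>a. a u) (\<lambda>a. a u) (x, y) z'"
    let ?f3 = "\<lambda>u z'. qp S1 S2 (block_kernel \<beta> T {u}) (\<lambda>_ _. 0) (\<lambda>a. a u) (\<lambda>a. a u) (x, y) z'"
    let ?R = "S1 \<times> S2 - A"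
    have "(\<Sum>z'\<in>?R. Q z z') = (\<Sum>z'\<in>?R. \<Sum>v\<in>H. ?f1 v z') + (\<Sum>z'\<in>?R. \<Sum>u\<in>F - W. ?f2 u z') + (\<Sum>z'\<in>?R. \<Sum>u\<in>T - F. ?f3 u z')"
      unfolding Q_def z by (simp only: sum.distrib)
    also have "(\<Sum>z'\<in>?R. \<Sum>v\<in>H. ?f1 v z') = (\<Sum>v\<in>H. \<Sum>z'\<in>?R. ?f1 v z')" by (rule sum.swap)
    also have "(\<Sum>z'\<in>?R. \<Sum>u\<in>F - W. ?f2 u z') = (\<Sum>u\<in>F - W. \<Sum>z'\<in>?R. ?f2 u z')" by (rule sum.swap)
    also have "(\<Sum>z'\<in>?R. \<Sum>u\<in>T - F. ?f3 u z') = (\<Sum>u\<in>T - F. \<Sum>z'\<in>?R. ?f3 u z')" by (rule sum.swap)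
    finally have dec: "(\<Sum>z'\<in>?R. Q z z') = (\<Sum>v\<in>H. \<Sum>z'\<in>?R. ?f1 v z') + (\<Sum>u\<in>F - W. \<Sum>z'\<in>?R. ?f2 u z') + (\<Sum>u\<in>T - F. \<Sum>z'\<in>?R. ?f3 u z')" .
    have b1: "(\<Sum>z'\<in>?R. ?f1 v z') \<le> \<theta> ^ (r - l)" if v: "v \<in> H" for v
    proof -
      have xy': "(x, y) \<in> {(x, y) \<in> confs (tree_vertices b h) \<times> confs (forest_F b h l w). \<forall>u\<in>set_G b h l w. x u = y u}"
        using xyA by (simp add: A_def S1_def S2_def T_def F_def G_def)
      show ?thesis using vctx.leave_v[OF vc[OF v] assms(2) xy']
        by (simp add: A_def S1_def S2_def T_def F_def G_def Bf_def Pf_def \<theta>_def)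
    qed
    have b2: "(\<Sum>z'\<in>?R. ?f2 u z') \<le> 0" if u: "u \<in> F - W" for u
    proof (cases "u \<in> G")
      case True
      then obtain v where v: "v \<in> H" and us: "u \<in> subtree b h (w v)" by (auto simp: G_def set_G_def H_def)
      have uw: "u \<noteq> w v" using u v by (auto simp: W_def)
      have agv: "\<forall>u\<in>subtree b h (w v). x u = y u" using ag vctx.subw_G[OF vc[OF v]] by (auto simp: G_def)
      have eq: "(\<Sum>\<eta>\<in>{\<eta>\<in>confs T. \<eta> u = t}. block_kernel \<beta> T {u} x \<eta>)
               = (\<Sum>\<eta>\<in>{\<eta>\<in>confs F. \<eta> u = t}. block_kernel \<beta> F {u} y \<eta>)" if t: "t = 1 \<or> t = -1" for t
        using vctx.single_eq[OF vc[OF v] assms(2), of x y u t] x y agv us uw t by (simp add: T_def F_def)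
      show ?thesis
        using leave_single_G[OF finT finF GT GF True, of x y \<beta>] xyA eq
        by (simp add: A_def S1_def S2_def)
    next
      case False
      have uT: "u \<in> T" using u FT by auto
      have nus: "\<forall>u'\<in>G. y' u' = y u'" if "block_kernel \<beta> F {u} y y' > 0" for y'
        using bk_supp[of \<beta> F "{u}" y y'] that False GF by (auto simp: cset_def)
      show ?thesis
        using leave_single_nonG[OF finT finF GT False uT, of x y "block_kernel \<beta> F {u}" \<beta>] xyA nus bk_nonneg
        by (simp add: A_def S1_def S2_def)
    qed
    have b3: "(\<Sum>z'\<in>?R. ?f3 u z') \<le> 0" if u: "u \<in> T - F" for u
    proof -
      have uG: "u \<notin> G" using u GF by auto
      have uT: "u \<in> T" using u by auto
      show ?thesis
        using leave_single_nonG[OF finT finF GT uG uT, of x y "\<lambda>_ _. 0" \<beta>] xyA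
        by (simp add: A_def S1_def S2_def)
    qed
    have "(\<Sum>v\<in>H. \<Sum>z'\<in>?R. ?f1 v z') \<le> (\<Sum>v\<in>H. \<theta> ^ (r - l))" by (rule sum_mono) (rule b1)
    also have "\<dots> = \<theta> ^ (r - l) * real b ^ l"
      using card_level[of l h b] assms by (simp add: H_def)
    finally have s1: "(\<Sum>v\<in>H. \<Sum>z'\<in>?R. ?f1 v z') \<le> \<theta> ^ (r - l) * real b ^ l" .
    have s2: "(\<Sum>u\<in>F - W. \<Sum>z'\<in>?R. ?f2 u z') \<le> 0" by (rule sum_nonpos) (rule b2)
    have s3: "(\<Sum>u\<in>T - F. \<Sum>z'\<in>?R. ?f3 u z') \<le> 0" by (rule sum_nonpos) (rule b3)
    show ?thesis using dec s1 s2 s3 by linarith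
  qed
  have finS: "finite (S1 \<times> S2)" using finS1 finS2 by simp
  have AS: "A \<subseteq> S1 \<times> S2" by (auto simp: A_def)
  have c0: "\<theta> ^ (r - l) * real b ^ l \<ge> 0"
    using assms(2) by (simp add: \<theta>_def)
  have z0: "(X0, Y0) \<in> A" using assms(7-9) by (simp add: A_def S1_def S2_def T_def F_def G_def)
  have nonneg: "\<forall>z\<in>A. \<forall>z'\<in>A. z' \<noteq> z \<longrightarrow> Q z z' \<ge> 0" using Qnn by blast
  have st: "\<forall>t\<ge>0. stay_prob (S1 \<times> S2) Q A (X0, Y0) t \<ge> exp (- (\<theta> ^ (r - l) * real b ^ l * t))"
  proof (intro allI impI)
    fix t :: real assume t: "t \<ge> 0"
    have "stay_prob (S1 \<times> S2) Q A (X0, Y0) t \<ge> exp (- (\<theta> ^ (r - l) * real b ^ l) * t)"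
      by (rule stay_prob_lower[OF finS AS c0 t z0 nonneg]) (use leave in blast)
    then show "stay_prob (S1 \<times> S2) Q A (X0, Y0) t \<ge> exp (- (\<theta> ^ (r - l) * real b ^ l * t))" by simp
  qed
  have "markov_coupling S1 (block_rate \<beta> T (blocks_X b h l w)) S2 (block_rate \<beta> F (blocks_Y b h l w)) Q
      \<and> (\<forall>t\<ge>0. stay_prob (S1 \<times> S2) Q A (X0, Y0) t \<ge> exp (- (\<theta> ^ (r - l) * real b ^ l * t)))"
    using mc st by blast
  then show ?thesis unfolding S1_def S2_def T_def F_def A_def G_def \<theta>_def by blast
qed


end
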